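(* In the setting below, let $W=\ker Q=\{z\in Z: Q(z)=0\}$ and assume that $Z^*$ is the complemented (topological direct) sum of $Y$ and $Q^*(X^* )$. Then $Y$ is isomorphic to $W^*$.
   Context: Setting: $X$ is a separable Banach space, $(x_n)$ a sequence in $S_X$ with $\{\pm x_n\}$ dense in $S_X$; $U$ is a Banach space with a normalized $1$-unconditional boundedly complete basis $(u_n)$. For finite $I,J\subseteq\mathbb N$, $I<J$ means $\max I<\min J$. $Z$ is the completion of $c_{00}$ (unit vectors $(e_i)$) under $\|a\|_Z=\max\{\|\sum_{j=1}^k\|\sum_{i\in I_j}a_ix_i\|_Xu_{\min I_j}\|_U: k\in\mathbb N,\ I_1<\dots<I_k\text{ intervals}\}$. $(e_j^* )$ are the coordinate functionals of the basis $(e_j)$ of $Z$, $Y=\overline{\mathrm{span}}\{e_j^*\}\subseteq Z^*$. $Q:Z\to X$ is the quotient map $Q(\sum a_je_j)=\sum a_jx_j$, and $Q^*:X^*\to Z^*$ its adjoint. *)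

theory Defs
  imports "HOL-Analysis.Analysis"
begin

text \<open>Scalars are real throughout. Indices start at 0.\<close>

definition schauder_basis :: "(nat \<Rightarrow> 'b::real_normed_vector) \<Rightarrow> bool" where
  "schauder_basis u \<longleftrightarrow> (\<forall>v. \<exists>!c. (\<lambda>n. c n *\<^sub>R u n) sums v)"

definition one_unconditional :: "(nat \<Rightarrow> 'b::real_normed_vector) \<Rightarrow> bool" where
  "one_unconditional u \<longleftrightarrow>
     (\<forall>n a \<epsilon>. (\<forall>i. \<bar>\<epsilon> i\<bar> = (1::real)) \<longrightarrow>
        norm (\<Sum>i<n. (\<epsilon> i * a i) *\<^sub>R u i) = norm (\<Sum>i<n. a i *\<^sub>R u i))"

definition boundedly_complete :: "(nat \<Rightarrow> 'b::real_normed_vector) \<Rightarrow> bool" where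
  "boundedly_complete u \<longleftrightarrow>
     (\<forall>a. (\<exists>B. \<forall>n. norm (\<Sum>i<n. a i *\<^sub>R u i) \<le> B) \<longrightarrow> summable (\<lambda>i. a i *\<^sub>R u i))"

text \<open>Families of successive intervals I_1 < ... < I_k (k \<ge> 1), I_j = {m_j..n_j}.\<close>
definition blocks :: "(nat \<times> nat) list \<Rightarrow> bool" where
  "blocks l \<longleftrightarrow> l \<noteq> [] \<and> (\<forall>p\<in>set l. fst p \<le> snd p) \<and> sorted_wrt (\<lambda>p q. snd p < fst q) l"

definition zval :: "(nat \<Rightarrow> 'a::real_normed_vector) \<Rightarrow> (nat \<Rightarrow> 'b::real_normed_vector)
    \<Rightarrow> (nat \<Rightarrow> real) \<Rightarrow> (nat \<times> nat) list \<Rightarrow> real" where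
  "zval x u a l = norm (sum_list (map (\<lambda>p. norm (\<Sum>i\<in>{fst p..snd p}. a i *\<^sub>R x i) *\<^sub>R u (fst p)) l))"

definition znorm :: "(nat \<Rightarrow> 'a::real_normed_vector) \<Rightarrow> (nat \<Rightarrow> 'b::real_normed_vector)
    \<Rightarrow> (nat \<Rightarrow> real) \<Rightarrow> real" where
  "znorm x u a = Sup {zval x u a l | l. blocks l}"

text \<open>Z, the completion of c00, realised as the scalar sequences whose expansion
  in the unit vector basis converges (partial sums are Cauchy in the Z-norm).\<close>
definition Zsp :: "(nat \<Rightarrow> 'a::real_normed_vector) \<Rightarrow> (nat \<Rightarrow> 'b::real_normed_vector)
    \<Rightarrow> (nat \<Rightarrow> real) set" where
  "Zsp x u = {a. \<forall>\<epsilon>>0. \<exists>N. \<forall>m n. N \<le> m \<longrightarrow> m \<le> n \<longrightarrow>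
                 znorm x u (\<lambda>i. if m \<le> i \<and> i < n then a i else 0) < \<epsilon>}"

definition bdd_funcs :: "(nat \<Rightarrow> real) set \<Rightarrow> ((nat \<Rightarrow> real) \<Rightarrow> real)
    \<Rightarrow> ((nat \<Rightarrow> real) \<Rightarrow> real) set" where
  "bdd_funcs S N = {f. (\<forall>a\<in>S. \<forall>b\<in>S. f (\<lambda>i. a i + b i) = f a + f b)
      \<and> (\<forall>r. \<forall>a\<in>S. f (\<lambda>i. r * a i) = r * f a)
      \<and> (\<exists>C. \<forall>a\<in>S. \<bar>f a\<bar> \<le> C * N a)
      \<and> (\<forall>a. a \<notin> S \<longrightarrow> f a = 0)}"

definition dnorm :: "(nat \<Rightarrow> real) set \<Rightarrow> ((nat \<Rightarrow> real) \<Rightarrow> real)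
    \<Rightarrow> ((nat \<Rightarrow> real) \<Rightarrow> real) \<Rightarrow> real" where
  "dnorm S N f = Sup {\<bar>f a\<bar> | a. a \<in> S \<and> N a \<le> 1}"

text \<open>Coordinate functionals e_j^* on Z and Y = closed span of them in Z^*.\<close>
definition coord_fun :: "(nat \<Rightarrow> real) set \<Rightarrow> nat \<Rightarrow> (nat \<Rightarrow> real) \<Rightarrow> real" where
  "coord_fun S j = (\<lambda>a. if a \<in> S then a j else 0)"

definition Yspace :: "(nat \<Rightarrow> 'a::real_normed_vector) \<Rightarrow> (nat \<Rightarrow> 'b::real_normed_vector)
    \<Rightarrow> ((nat \<Rightarrow> real) \<Rightarrow> real) set" where
  "Yspace x u = {f \<in> bdd_funcs (Zsp x u) (znorm x u).
      \<forall>\<epsilon>>0. \<exists>n c. dnorm (Zsp x u) (znorm x u)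
          (\<lambda>a. f a - (\<Sum>j<n. c j * coord_fun (Zsp x u) j a)) < \<epsilon>}"

definition Qmap :: "(nat \<Rightarrow> 'a::real_normed_vector) \<Rightarrow> (nat \<Rightarrow> real) \<Rightarrow> 'a" where
  "Qmap x a = (\<Sum>j. a j *\<^sub>R x j)"

definition Wsp :: "(nat \<Rightarrow> 'a::real_normed_vector) \<Rightarrow> (nat \<Rightarrow> 'b::real_normed_vector)
    \<Rightarrow> (nat \<Rightarrow> real) set" where
  "Wsp x u = {a \<in> Zsp x u. Qmap x a = 0}"

definition Qadj_range :: "(nat \<Rightarrow> 'a::real_normed_vector) \<Rightarrow> (nat \<Rightarrow> 'b::real_normed_vector)
    \<Rightarrow> ((nat \<Rightarrow> real) \<Rightarrow> real) set" where
  "Qadj_range x u = {(\<lambda>a. if a \<in> Zsp x u then \<phi> (Qmap x a) else 0) | \<phi>::'a \<Rightarrow> real. bounded_linear \<phi>}"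

definition top_direct_sum :: "((nat \<Rightarrow> real) \<Rightarrow> real) set \<Rightarrow> (((nat \<Rightarrow> real) \<Rightarrow> real) \<Rightarrow> real)
    \<Rightarrow> ((nat \<Rightarrow> real) \<Rightarrow> real) set \<Rightarrow> ((nat \<Rightarrow> real) \<Rightarrow> real) set \<Rightarrow> bool" where
  "top_direct_sum E NE A B \<longleftrightarrow> A \<subseteq> E \<and> B \<subseteq> E \<and> A \<inter> B = {(\<lambda>a. 0)}
     \<and> (\<forall>h\<in>E. \<exists>f\<in>A. \<exists>g\<in>B. h = (\<lambda>a. f a + g a))
     \<and> (\<exists>C. \<forall>f\<in>A. \<forall>g\<in>B. NE f \<le> C * NE (\<lambda>a. f a + g a))"

definition fs_isomorphic :: "((nat \<Rightarrow> real) \<Rightarrow> real) set \<Rightarrow> (((nat \<Rightarrow> real) \<Rightarrow> real) \<Rightarrow> real)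
    \<Rightarrow> ((nat \<Rightarrow> real) \<Rightarrow> real) set \<Rightarrow> (((nat \<Rightarrow> real) \<Rightarrow> real) \<Rightarrow> real) \<Rightarrow> bool" where
  "fs_isomorphic A NA B NB \<longleftrightarrow> (\<exists>T. T ` A = B \<and> inj_on T A
     \<and> (\<forall>f\<in>A. \<forall>g\<in>A. T (\<lambda>a. f a + g a) = (\<lambda>a. T f a + T g a))
     \<and> (\<forall>r. \<forall>f\<in>A. T (\<lambda>a. r * f a) = (\<lambda>a. r * T f a))
     \<and> (\<exists>c C. 0 < c \<and> (\<forall>f\<in>A. c * NA f \<le> NB (T f) \<and> NB (T f) \<le> C * NA f)))"

end

theory Submission
  imports Defs
begin

instantiation "fun" :: (type, plus) plus
begin
definition plus_fun :: "('a \<Rightarrow> 'b) \<Rightarrow> ('a \<Rightarrow> 'b) \<Rightarrow> 'a \<Rightarrow> 'b" where "plus_fun f g = (\<lambda>x. f x + g x)"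
instance ..
end

instantiation "fun" :: (type, zero) zero
begin
definition zero_fun :: "'a \<Rightarrow> 'b" where "zero_fun = (\<lambda>x. 0)"
instance ..
end

instance "fun" :: (type, ab_group_add) ab_group_add
  by standard (simp_all add: fun_eq_iff plus_fun_def zero_fun_def algebra_simps)


instantiation "fun" :: (type, real_vector) real_vector
begin
definition scaleR_fun :: "real \<Rightarrow> ('a \<Rightarrow> 'b) \<Rightarrow> 'a \<Rightarrow> 'b" where
  "scaleR_fun r f = (\<lambda>x. r *\<^sub>R f x)"
instance
  by standard (auto simp: scaleR_fun_def plus_fun_def fun_eq_iff algebra_simps)
end

lemma lam_add: "(\<lambda>i. a i + b i) = a + b" by (simp add: plus_fun_def)
lemma lam_scale: "(\<lambda>i. r * a i) = r *\<^sub>R (a :: 'a \<Rightarrow> real)" by (simp add: scaleR_fun_def)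
lemma fun_add_apply: "(a + b) i = a i + b i" by (simp add: plus_fun_def)
lemma fun_scale_apply: "(r *\<^sub>R a) i = r *\<^sub>R a i" by (simp add: scaleR_fun_def)
lemma fun_zero_apply: "(0::'a\<Rightarrow>'b::zero) i = 0" by (simp add: zero_fun_def)
lemma fun_minus_apply: "(a - b) i = a i - (b i::'b::ab_group_add)" by (simp add: fun_diff_def)
lemma fun_uminus_apply: "(- a) i = - (a i::'b::ab_group_add)" by (simp add: fun_Compl_def)
lemma lam_zero: "(\<lambda>i. 0) = (0::'a\<Rightarrow>'b::zero)" by (simp add: zero_fun_def)

definition lsub :: "'v::real_vector set \<Rightarrow> bool" where
  "lsub S \<longleftrightarrow> 0 \<in> S \<and> (\<forall>x\<in>S. \<forall>y\<in>S. x + y \<in> S) \<and> (\<forall>c. \<forall>x\<in>S. c *\<^sub>R x \<in> S)"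

lemma lsubD: assumes "lsub S"
  shows "0 \<in> S" "x \<in> S \<Longrightarrow> y \<in> S \<Longrightarrow> x + y \<in> S" "x \<in> S \<Longrightarrow> c *\<^sub>R x \<in> S"
    "x \<in> S \<Longrightarrow> y \<in> S \<Longrightarrow> x - y \<in> S" "x \<in> S \<Longrightarrow> - x \<in> S"
proof -
  show "0 \<in> S" "x \<in> S \<Longrightarrow> y \<in> S \<Longrightarrow> x + y \<in> S" "x \<in> S \<Longrightarrow> c *\<^sub>R x \<in> S"
    using assms by (auto simp: lsub_def)
  show mx: "- x \<in> S" if "x \<in> S" for x
  proof -
    have "(-1) *\<^sub>R x \<in> S" using assms that unfolding lsub_def by blast
    then show ?thesis by simp
  qed
  show "x - y \<in> S" if "x \<in> S" "y \<in> S"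
  proof -
    have "x + (- y) \<in> S" using assms that mx[of y] unfolding lsub_def by blast
    then show ?thesis by simp
  qed
qed

definition HBset :: "'v::real_vector set \<Rightarrow> 'v set \<Rightarrow> ('v \<Rightarrow> real) \<Rightarrow> ('v \<Rightarrow> real) \<Rightarrow> ('v \<times> real) set set" where
  "HBset V W p g = {G. G \<subseteq> V \<times> UNIV \<and> lsub G \<and> (\<forall>a t t'. (a,t) \<in> G \<longrightarrow> (a,t') \<in> G \<longrightarrow> t = t')
      \<and> (\<forall>a t. (a,t) \<in> G \<longrightarrow> t \<le> p a) \<and> (\<forall>a\<in>W. (a, g a) \<in> G)}"

lemma hahn_banach:
  fixes V W :: "'v::real_vector set" and p g :: "'v \<Rightarrow> real"
  assumes subV: "lsub V" and subW: "lsub W" and WV: "W \<subseteq> V"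
  and p_add: "\<And>a b. a\<in>V \<Longrightarrow> b\<in>V \<Longrightarrow> p (a+b) \<le> p a + p b"
  and p_scale: "\<And>r a. a\<in>V \<Longrightarrow> 0 < r \<Longrightarrow> p (r *\<^sub>R a) = r * p a"
  and g_add: "\<And>a b. a\<in>W \<Longrightarrow> b\<in>W \<Longrightarrow> g (a+b) = g a + g b"
  and g_scale: "\<And>r a. a\<in>W \<Longrightarrow> g (r*\<^sub>R a) = r * g a"
  and g_le: "\<And>a. a\<in>W \<Longrightarrow> g a \<le> p a"
  shows "\<exists>h. (\<forall>a\<in>V. \<forall>b\<in>V. h (a+b) = h a + h b) \<and> (\<forall>r. \<forall>a\<in>V. h (r*\<^sub>R a) = r * h a)
            \<and> (\<forall>a\<in>W. h a = g a) \<and> (\<forall>a\<in>V. h a \<le> p a)"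
proof -
  define A where "A = HBset V W p g"
  define G0 where "G0 = (\<lambda>a. (a, g a)) ` W"
  have G0A: "G0 \<in> A"
  proof -
    have "lsub G0" unfolding lsub_def G0_def
    proof (intro conjI ballI allI)
      show "0 \<in> (\<lambda>a. (a, g a)) ` W"
        using g_scale[of 0 0] lsubD(1)[OF subW] by (auto simp: zero_prod_def intro!: image_eqI[of _ _ 0])
    next
      fix x y assume "x \<in> (\<lambda>a. (a, g a)) ` W" "y \<in> (\<lambda>a. (a, g a)) ` W"
      then obtain a b where "a \<in> W" "b \<in> W" "x = (a, g a)" "y = (b, g b)" by auto
      then show "x + y \<in> (\<lambda>a. (a, g a)) ` W"
        using g_add lsubD(2)[OF subW] by (auto intro!: image_eqI[of _ _ "a+b"])
    next
      fix c x assume "x \<in> (\<lambda>a. (a, g a)) ` W"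
      then obtain a where "a \<in> W" "x = (a, g a)" by auto
      then show "c *\<^sub>R x \<in> (\<lambda>a. (a, g a)) ` W"
        using g_scale lsubD(3)[OF subW] by (auto intro!: image_eqI[of _ _ "c *\<^sub>R a"])
    qed
    then show ?thesis using WV g_le unfolding A_def HBset_def G0_def by auto
  qed
  have "\<forall>C\<in>chains A. \<exists>U\<in>A. \<forall>X\<in>C. X \<subseteq> U"
  proof
    fix C assume C: "C \<in> chains A"
    show "\<exists>U\<in>A. \<forall>X\<in>C. X \<subseteq> U"
    proof (cases "C = {}")
      case True then show ?thesis using G0A by auto
    next
      case False
      then obtain X0 where X0: "X0 \<in> C" by auto
      have CA: "C \<subseteq> A" and ch: "\<And>X Y. X \<in> C \<Longrightarrow> Y \<in> C \<Longrightarrow> X \<subseteq> Y \<or> Y \<subseteq> X"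
        using C unfolding chains_def chain_subset_def by auto
      have two: "\<exists>X\<in>C. a \<in> X \<and> b \<in> X" if "a \<in> \<Union>C" "b \<in> \<Union>C" for a b
        using that ch by blast
      have "\<Union>C \<in> A" unfolding A_def HBset_def mem_Collect_eq
      proof (intro conjI allI impI ballI)
        show "\<Union> C \<subseteq> V \<times> UNIV" using CA unfolding A_def HBset_def by blast
        show "lsub (\<Union> C)" unfolding lsub_def
        proof (intro conjI ballI allI)
          show "0 \<in> \<Union>C" using X0 CA lsubD(1) unfolding A_def HBset_def by blast
        next
          fix a b assume "a \<in> \<Union>C" "b \<in> \<Union>C"
          then obtain X where "X \<in> C" "a \<in> X" "b \<in> X" using two by blast
          then show "a + b \<in> \<Union>C" using CA lsubD(2) unfolding A_def HBset_def by blast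
        next
          fix c a assume "a \<in> \<Union>C"
          then obtain X where "X \<in> C" "a \<in> X" by blast
          then show "c *\<^sub>R a \<in> \<Union>C" using CA lsubD(3) unfolding A_def HBset_def by blast
        qed
      next
        fix a t t' assume "(a,t) \<in> \<Union>C" "(a,t') \<in> \<Union>C"
        then obtain X where "X \<in> C" "(a,t) \<in> X" "(a,t') \<in> X" using two by blast
        then show "t = t'" using CA unfolding A_def HBset_def by blast
      next
        fix a t assume "(a,t) \<in> \<Union>C"
        then show "t \<le> p a" using CA unfolding A_def HBset_def by blast
      next
        fix a assume "a \<in> W"
        then show "(a, g a) \<in> \<Union>C" using X0 CA unfolding A_def HBset_def by blast
      qed
      then show ?thesis by blast
    qed
  qed
  from Zorn_Lemma2[OF this] obtain M where MA: "M \<in> A" and Mmax: "\<And>X. X \<in> A \<Longrightarrow> M \<subseteq> X \<Longrightarrow> X = M"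
    by blast
  have MV: "M \<subseteq> V \<times> UNIV" and Ml: "lsub M"
    and Mf: "\<And>a t t'. (a,t) \<in> M \<Longrightarrow> (a,t') \<in> M \<Longrightarrow> t = t'"
    and Mp: "\<And>a t. (a,t) \<in> M \<Longrightarrow> t \<le> p a" and MW: "\<And>a. a \<in> W \<Longrightarrow> (a, g a) \<in> M"
    using MA unfolding A_def HBset_def by auto
  have dom: "\<exists>t. (a,t) \<in> M" if aV: "a \<in> V" for a
  proof (rule ccontr)
    assume nd: "\<not> (\<exists>t. (a,t) \<in> M)"
    define S where "S = {t - p (s - a) | s t. (s,t) \<in> M}"
    have S0: "0 - p (0 - a) \<in> S" using lsubD(1)[OF Ml] unfolding S_def zero_prod_def by blast
    have Sb: "y \<le> p (s' + a) - t'" if "y \<in> S" "(s',t') \<in> M" for y s' t'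
    proof -
      obtain s t where st: "(s,t) \<in> M" "y = t - p (s - a)" using \<open>y \<in> S\<close> unfolding S_def by blast
      have "(s + s', t + t') \<in> M" using lsubD(2)[OF Ml st(1) that(2)] by simp
      then have "t + t' \<le> p (s + s')" using Mp by blast
      also have "\<dots> = p ((s - a) + (s' + a))" by (simp add: algebra_simps)
      also have "\<dots> \<le> p (s - a) + p (s' + a)"
      proof -
        have "s \<in> V" "s' \<in> V" using MV st(1) that(2) by auto
        then have "s - a \<in> V" "s' + a \<in> V" using lsubD(4,2)[OF subV] aV by auto
        then show ?thesis by (rule p_add)
      qed
      finally show ?thesis using st by simp
    qed
    define c where "c = Sup S"
    have bdd: "bdd_above S" using Sb[of _ 0 0] lsubD(1)[OF Ml] unfolding bdd_above_def zero_prod_def by blast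
    have c_ge: "t - p (s - a) \<le> c" if "(s,t) \<in> M" for s t
      unfolding c_def using that bdd by (intro cSup_upper) (auto simp: S_def)
    have c_le: "c \<le> p (s + a) - t" if "(s,t) \<in> M" for s t
      unfolding c_def using S0 Sb[OF _ that] by (intro cSup_least) auto
    define M' where "M' = {(s + r *\<^sub>R a, t + r * c) | s t r. (s,t) \<in> M}"
    have MM': "M \<subseteq> M'" unfolding M'_def by force
    have "M' \<in> A" unfolding A_def HBset_def mem_Collect_eq
    proof (intro conjI allI impI ballI)
      show "M' \<subseteq> V \<times> UNIV"
      proof
        fix y assume "y \<in> M'"
        then obtain s t r where st: "(s,t) \<in> M" "y = (s + r *\<^sub>R a, t + r * c)" unfolding M'_def by blast
        then have "s \<in> V" using MV by blast
        then have "s + r *\<^sub>R a \<in> V" using lsubD(2,3)[OF subV] aV by simp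
        then show "y \<in> V \<times> UNIV" using st by simp
      qed
      show "lsub M'" unfolding lsub_def
      proof (intro conjI ballI allI)
        show "0 \<in> M'" using MM' lsubD(1)[OF Ml] by blast
      next
        fix y z assume "y \<in> M'" "z \<in> M'"
        then obtain s t r s' t' r' where "(s,t) \<in> M" "(s',t') \<in> M"
          "y = (s + r *\<^sub>R a, t + r * c)" "z = (s' + r' *\<^sub>R a, t' + r' * c)"
          unfolding M'_def by blast
        moreover have "(s + s', t + t') \<in> M" using lsubD(2)[OF Ml \<open>(s,t) \<in> M\<close> \<open>(s',t') \<in> M\<close>] by simp
        moreover have "y + z = ((s + s') + (r + r') *\<^sub>R a, (t + t') + (r + r') * c)"
          using calculation by (simp add: algebra_simps)
        ultimately show "y + z \<in> M'" unfolding M'_def by blast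
      next
        fix k y assume "y \<in> M'"
        then obtain s t r where "(s,t) \<in> M" "y = (s + r *\<^sub>R a, t + r * c)"
          unfolding M'_def by blast
        moreover have "(k *\<^sub>R s, k * t) \<in> M" using lsubD(3)[OF Ml \<open>(s,t) \<in> M\<close>, of k] by simp
        moreover have "k *\<^sub>R y = (k *\<^sub>R s + (k * r) *\<^sub>R a, k * t + (k * r) * c)"
          using calculation by (simp add: algebra_simps)
        ultimately show "k *\<^sub>R y \<in> M'" unfolding M'_def by blast
      qed
    next
      fix b t1 t2 assume "(b,t1) \<in> M'" "(b,t2) \<in> M'"
      then obtain s t r s' t' r' where st: "(s,t) \<in> M" "(s',t') \<in> M"
          "b = s + r *\<^sub>R a" "t1 = t + r * c" "b = s' + r' *\<^sub>R a" "t2 = t' + r' * c"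
          unfolding M'_def by blast
      have d: "(s' - s, t' - t) \<in> M" using lsubD(4)[OF Ml st(2) st(1)] by simp
      have eq: "(r - r') *\<^sub>R a = s' - s" using st(3,5) by (simp add: algebra_simps)
      have "r = r'"
      proof (rule ccontr)
        assume "r \<noteq> r'"
        then have "a = (1 / (r - r')) *\<^sub>R ((r - r') *\<^sub>R a)" by simp
        then have "a = (1 / (r - r')) *\<^sub>R (s' - s)" using eq by simp
        then have "(a, (1 / (r - r')) * (t' - t)) \<in> M" using lsubD(3)[OF Ml d, of "1/(r-r')"] by simp
        then show False using nd by blast
      qed
      then have "s = s'" using st(3,5) by simp
      then have "t = t'" using Mf st(1,2) by blast
      then show "t1 = t2" using st \<open>r = r'\<close> by simp
    next
      fix b t1 assume "(b,t1) \<in> M'"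
      then obtain s t r where st: "(s,t) \<in> M" "b = s + r *\<^sub>R a" "t1 = t + r * c"
          unfolding M'_def by blast
      have sV: "s \<in> V" using MV st(1) by blast
      consider "r = 0" | "r > 0" | "r < 0" by linarith
      then show "t1 \<le> p b"
      proof cases
        case 1 then show ?thesis using st Mp by simp
      next
        case 2
        have "((1/r) *\<^sub>R s, (1/r) * t) \<in> M" using lsubD(3)[OF Ml st(1), of "1/r"] by simp
        then have "c \<le> p ((1/r) *\<^sub>R s + a) - (1/r) * t" by (rule c_le)
        moreover have "p b = r * p ((1/r) *\<^sub>R s + a)"
        proof -
          have "b = r *\<^sub>R ((1/r) *\<^sub>R s + a)" using st(2) 2 by (simp add: algebra_simps)
          moreover have "(1/r) *\<^sub>R s + a \<in> V" using lsubD(2,3)[OF subV] sV aV by simp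
          ultimately show ?thesis using p_scale 2 by simp
        qed
        ultimately have "r * c \<le> r * (p ((1/r) *\<^sub>R s + a) - (1/r) * t)"
          using 2 by (intro mult_left_mono) auto
        also have "\<dots> = p b - t" using \<open>p b = _\<close> 2 by (simp add: field_simps)
        finally show ?thesis using st(3) by simp
      next
        case 3
        define q where "q = - r"
        have q: "q > 0" using 3 q_def by simp
        have "((1/q) *\<^sub>R s, (1/q) * t) \<in> M" using lsubD(3)[OF Ml st(1), of "1/q"] by simp
        then have "(1/q) * t - p ((1/q) *\<^sub>R s - a) \<le> c" by (rule c_ge)
        moreover have "p b = q * p ((1/q) *\<^sub>R s - a)"
        proof -
          have "b = q *\<^sub>R ((1/q) *\<^sub>R s - a)" using st(2) q q_def by (simp add: algebra_simps)
          moreover have "(1/q) *\<^sub>R s - a \<in> V" using lsubD(4,3)[OF subV] sV aV by simp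
          ultimately show ?thesis using p_scale q by simp
        qed
        ultimately have "q * ((1/q) * t - p ((1/q) *\<^sub>R s - a)) \<le> q * c"
          using q by (intro mult_left_mono) auto
        moreover have "q * ((1/q) * t - p ((1/q) *\<^sub>R s - a)) = t - p b" using \<open>p b = _\<close> q by (simp add: field_simps)
        ultimately show ?thesis using st(3) q_def by simp
      qed
    next
      fix b assume "b \<in> W" then show "(b, g b) \<in> M'" using MW MM' by blast
    qed
    then have "M' = M" using Mmax MM' by blast
    moreover have "(a, c) \<in> M'"
    proof -
      have "(0, 0) \<in> M" using lsubD(1)[OF Ml] by (simp add: zero_prod_def)
      moreover have "(a, c) = (0 + 1 *\<^sub>R a, 0 + 1 * c)" by simp
      ultimately show ?thesis unfolding M'_def by blast
    qed
    ultimately show False using nd by blast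
  qed
  define h where "h a = (THE t. (a,t) \<in> M)" for a
  have hM: "(a, h a) \<in> M" if aV: "a \<in> V" for a
  proof -
    obtain t where t: "(a,t) \<in> M" using dom[OF aV] by blast
    have "(THE t. (a,t) \<in> M) = t" using t Mf by (intro the_equality) auto
    then show ?thesis using t unfolding h_def by simp
  qed
  have hu: "h a = t" if "(a,t) \<in> M" for a t
    using that Mf unfolding h_def by (intro the_equality) auto
  show ?thesis
  proof (intro exI conjI ballI allI)
    fix a b assume "a \<in> V" "b \<in> V"
    then have "(a, h a) + (b, h b) \<in> M" using lsubD(2)[OF Ml hM hM] by simp
    then have "(a + b, h a + h b) \<in> M" by simp
    then show "h (a + b) = h a + h b" by (rule hu)
  next
    fix r a assume "a \<in> V"
    then have "r *\<^sub>R (a, h a) \<in> M" using lsubD(3)[OF Ml hM] by simp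
    then have "(r *\<^sub>R a, r * h a) \<in> M" by simp
    then show "h (r *\<^sub>R a) = r * h a" by (rule hu)
  next
    fix a assume "a \<in> W" then show "h a = g a" using MW hu by blast
  next
    fix a assume "a \<in> V" then show "h a \<le> p a" using hM Mp by blast
  qed
qed

lemma sum_list_map_nonneg: "(\<And>p. p \<in> set l \<Longrightarrow> (0::real) \<le> f p) \<Longrightarrow> 0 \<le> sum_list (map f l)"
  by (induction l) auto

lemma sum_list_map_mono: "(\<And>p. p \<in> set l \<Longrightarrow> (f p::real) \<le> g p) \<Longrightarrow> sum_list (map f l) \<le> sum_list (map g l)"
  by (induction l) (auto intro: add_mono)

lemma sum_list_map_add: "sum_list (map (\<lambda>p. f p + g p) l) = sum_list (map f l) + (sum_list (map g l) :: real)"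
  by (induction l) auto

lemma sum_list_map_cmult: "sum_list (map (\<lambda>p. c * f p) l) = c * (sum_list (map f l) :: real)"
  by (induction l) (auto simp: algebra_simps)

lemma norm_sum_list_map_le: "norm (sum_list (map f l)) \<le> sum_list (map (\<lambda>p. norm (f p)) l)"
  by (induction l) (auto intro: order_trans[OF norm_triangle_ineq])

definition blk :: "(nat \<Rightarrow> 'a::real_normed_vector) \<Rightarrow> (nat \<Rightarrow> real) \<Rightarrow> nat \<times> nat \<Rightarrow> real" where
  "blk x a p = norm (\<Sum>i\<in>{fst p..snd p}. a i *\<^sub>R x i)"

definition dco :: "(nat \<Rightarrow> 'a::real_normed_vector) \<Rightarrow> (nat \<Rightarrow> real) \<Rightarrow> (nat \<times> nat) list \<Rightarrow> nat \<Rightarrow> real" where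
  "dco x a l i = sum_list (map (\<lambda>p. if fst p = i then blk x a p else 0) l)"

lemma sumlist_rep:
  fixes u :: "nat \<Rightarrow> 'b::real_normed_vector"
  assumes "\<forall>p\<in>set l. fst p < M"
  shows "sum_list (map (\<lambda>p. c p *\<^sub>R u (fst p)) l) = (\<Sum>i<M. sum_list (map (\<lambda>p. if fst p = i then c p else 0) l) *\<^sub>R u i)"
  using assms
proof (induction l)
  case Nil then show ?case by simp
next
  case (Cons p l)
  have "(\<Sum>i<M. (if fst p = i then c p else 0) *\<^sub>R u i) = (\<Sum>i<M. if fst p = i then c p *\<^sub>R u i else 0)"
    by (rule sum.cong) auto
  also have "\<dots> = c p *\<^sub>R u (fst p)" using Cons.prems by (simp add: sum.delta)
  finally have e: "(\<Sum>i<M. (if fst p = i then c p else 0) *\<^sub>R u i) = c p *\<^sub>R u (fst p)" .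
  show ?case using Cons e by (simp add: scaleR_add_left sum.distrib)
qed

lemma zval_rep:
  assumes "\<forall>p\<in>set l. fst p < M"
  shows "zval x u a l = norm (\<Sum>i<M. dco x a l i *\<^sub>R u i)"
  unfolding zval_def dco_def blk_def[symmetric] using sumlist_rep[OF assms, of "blk x a" u] by simp

lemma exM: "\<exists>M. \<forall>p\<in>set (l::(nat\<times>nat) list). fst p < M \<and> snd p < M"
proof -
  have "\<forall>p\<in>set l. fst p < Suc (sum_list (map fst l)) \<and> snd p < Suc (sum_list (map snd l))"
    by (auto simp: le_imp_less_Suc member_le_sum_list)
  then show ?thesis by (metis max.strict_coboundedI1 max.strict_coboundedI2)
qed

lemma dco_nonneg: "0 \<le> dco x a l i"
  unfolding dco_def blk_def by (rule sum_list_map_nonneg) auto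

lemma blk_add: "blk x (a + b) p \<le> blk x a p + blk x b p"
  unfolding blk_def by (simp add: plus_fun_def scaleR_add_left sum.distrib norm_triangle_ineq)

lemma blk_scale: "blk x (r *\<^sub>R a) p = \<bar>r\<bar> * blk x a p"
proof -
  have "(\<Sum>i\<in>{fst p..snd p}. (r *\<^sub>R a) i *\<^sub>R x i) = r *\<^sub>R (\<Sum>i\<in>{fst p..snd p}. a i *\<^sub>R x i)"
    by (simp add: scaleR_fun_def scaleR_sum_right)
  then show ?thesis unfolding blk_def by simp
qed

lemma dco_add: "dco x (a + b) l i \<le> dco x a l i + dco x b l i"
  unfolding dco_def sum_list_map_add[symmetric]
  by (rule sum_list_map_mono) (auto simp: blk_add)

lemma dco_scale: "dco x (r *\<^sub>R a) l i = \<bar>r\<bar> * dco x a l i"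
  unfolding dco_def sum_list_map_cmult[symmetric] by (rule arg_cong[where f=sum_list]) (auto simp: blk_scale)

lemma zval_nonneg: "0 \<le> zval x u a l" by (simp add: zval_def)

lemma disj_sum:
  fixes f :: "nat \<Rightarrow> real"
  assumes "\<And>i. 0 \<le> f i" "sorted_wrt (\<lambda>p q. snd p < fst q) l" "\<forall>p\<in>set l. fst p \<le> snd p"
    "\<forall>p\<in>set l. m \<le> fst p \<and> snd p < M"
  shows "sum_list (map (\<lambda>p. \<Sum>i\<in>{fst p..snd p}. f i) l) \<le> (\<Sum>i\<in>{m..<M}. f i)"
  using assms(2-4)
proof (induction l arbitrary: m)
  case Nil then show ?case using assms(1) by (simp add: sum_nonneg)
next
  case (Cons p l)
  have p: "m \<le> fst p" "fst p \<le> snd p" "snd p < M" using Cons.prems by auto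
  have "(\<Sum>i\<in>{fst p..snd p}. f i) \<le> (\<Sum>i\<in>{m..<Suc (snd p)}. f i)"
    using p assms(1) by (intro sum_mono2) auto
  moreover have "sum_list (map (\<lambda>p. \<Sum>i\<in>{fst p..snd p}. f i) l) \<le> (\<Sum>i\<in>{Suc (snd p)..<M}. f i)"
    using Cons.prems by (intro Cons.IH) auto
  moreover have "(\<Sum>i\<in>{m..<Suc (snd p)}. f i) + (\<Sum>i\<in>{Suc (snd p)..<M}. f i) = (\<Sum>i\<in>{m..<M}. f i)"
    using p by (intro sum.atLeastLessThan_concat) auto
  ultimately show ?case by simp
qed


lemma zval_cong:
  assumes "\<And>p i. p \<in> set l \<Longrightarrow> fst p \<le> i \<Longrightarrow> i \<le> snd p \<Longrightarrow> a i = b i"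
  shows "zval x u a l = zval x u b l"
proof -
  have "map (\<lambda>p. norm (\<Sum>i\<in>{fst p..snd p}. a i *\<^sub>R x i) *\<^sub>R u (fst p)) l
      = map (\<lambda>p. norm (\<Sum>i\<in>{fst p..snd p}. b i *\<^sub>R x i) *\<^sub>R u (fst p)) l"
  proof (rule map_cong)
    fix p assume "p \<in> set l"
    then have "(\<Sum>i\<in>{fst p..snd p}. a i *\<^sub>R x i) = (\<Sum>i\<in>{fst p..snd p}. b i *\<^sub>R x i)"
      using assms by (intro sum.cong) auto
    then show "norm (\<Sum>i\<in>{fst p..snd p}. a i *\<^sub>R x i) *\<^sub>R u (fst p) = norm (\<Sum>i\<in>{fst p..snd p}. b i *\<^sub>R x i) *\<^sub>R u (fst p)"
      by simp
  qed simp
  then show ?thesis unfolding zval_def by (rule arg_cong[where f="\<lambda>l. norm (sum_list l)"])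
qed

lemma zval_fin:
  fixes x :: "nat \<Rightarrow> 'a::real_normed_vector" and u :: "nat \<Rightarrow> 'b::real_normed_vector"
  assumes unorm: "\<And>n. norm (u n) = 1" and xnorm: "\<And>n. norm (x n) = 1"
    and bl: "blocks l" and K: "\<And>i. K \<le> i \<Longrightarrow> a i = 0"
  shows "zval x u a l \<le> (\<Sum>i<K. \<bar>a i\<bar>)"
proof -
  obtain M0 where M0: "\<forall>p\<in>set l. fst p < M0 \<and> snd p < M0" using exM by blast
  define M where "M = max M0 K"
  have M: "\<forall>p\<in>set l. 0 \<le> fst p \<and> snd p < M" using M0 unfolding M_def by force
  have "zval x u a l \<le> sum_list (map (\<lambda>p. norm (blk x a p *\<^sub>R u (fst p))) l)"
    unfolding zval_def blk_def[symmetric] by (rule norm_sum_list_map_le)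
  also have "\<dots> = sum_list (map (\<lambda>p. blk x a p) l)" using unorm by (simp add: blk_def)
  also have "\<dots> \<le> sum_list (map (\<lambda>p. \<Sum>i\<in>{fst p..snd p}. \<bar>a i\<bar>) l)"
  proof (rule sum_list_map_mono)
    fix p
    have "blk x a p \<le> (\<Sum>i\<in>{fst p..snd p}. norm (a i *\<^sub>R x i))" unfolding blk_def by (rule norm_sum)
    then show "blk x a p \<le> (\<Sum>i\<in>{fst p..snd p}. \<bar>a i\<bar>)" using xnorm by simp
  qed
  also have "\<dots> \<le> (\<Sum>i\<in>{0..<M}. \<bar>a i\<bar>)"
    using bl M by (intro disj_sum) (auto simp: blocks_def)
  also have "\<dots> = (\<Sum>i<K. \<bar>a i\<bar>)"
  proof -
    have "(\<Sum>i\<in>{0..<M}. \<bar>a i\<bar>) = (\<Sum>i\<in>{0..<K}. \<bar>a i\<bar>) + (\<Sum>i\<in>{K..<M}. \<bar>a i\<bar>)"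
      unfolding M_def by (intro sum.atLeastLessThan_concat[symmetric]) auto
    moreover have "(\<Sum>i\<in>{K..<M}. \<bar>a i\<bar>) = 0" using K by simp
    ultimately show ?thesis by (simp add: atLeast0LessThan)
  qed
  finally show ?thesis .
qed


definition zb :: "(nat \<Rightarrow> 'a::real_normed_vector) \<Rightarrow> (nat \<Rightarrow> 'b::real_normed_vector) \<Rightarrow> (nat \<Rightarrow> real) \<Rightarrow> bool" where
  "zb x u a \<longleftrightarrow> bdd_above {zval x u a l | l. blocks l}"

definition rs :: "nat \<Rightarrow> nat \<Rightarrow> (nat \<Rightarrow> real) \<Rightarrow> nat \<Rightarrow> real" where
  "rs m n a = (\<lambda>i. if m \<le> i \<and> i < n then a i else 0)"

lemma blocks_single: "m \<le> n \<Longrightarrow> blocks [(m,n)]" by (simp add: blocks_def)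

lemma ZV_ne: "{zval x u a l | l. blocks l} \<noteq> {}"
  using blocks_single[of 0 0] by blast

lemma N_ge: "zb x u a \<Longrightarrow> blocks l \<Longrightarrow> zval x u a l \<le> znorm x u a"
  unfolding znorm_def zb_def by (rule cSup_upper) auto

lemma N_le: "(\<And>l. blocks l \<Longrightarrow> zval x u a l \<le> B) \<Longrightarrow> znorm x u a \<le> B"
  unfolding znorm_def using ZV_ne blocks_single[of 0 0] by (intro cSup_least) auto

lemma N_nonneg: "zb x u a \<Longrightarrow> 0 \<le> znorm x u a"
  using N_ge[OF _ blocks_single[of 0 0]] zval_nonneg order_trans by blast

lemma Zsp_iff: "a \<in> Zsp x u \<longleftrightarrow> (\<forall>\<epsilon>>0. \<exists>N. \<forall>m n. N \<le> m \<longrightarrow> m \<le> n \<longrightarrow> znorm x u (rs m n a) < \<epsilon>)"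
  by (simp add: Zsp_def rs_def)

lemma rs_add: "rs m n (a + b) = rs m n a + rs m n b"
  by (simp add: rs_def fun_eq_iff plus_fun_def)
lemma rs_scale: "rs m n (r *\<^sub>R a) = r *\<^sub>R rs m n a"
  by (simp add: rs_def fun_eq_iff scaleR_fun_def)
lemma rs_zero: "rs m n 0 = 0"
  by (simp add: rs_def fun_eq_iff zero_fun_def)

context
  fixes x :: "nat \<Rightarrow> 'a::banach" and u :: "nat \<Rightarrow> 'b::banach"
  assumes unorm: "\<And>n. norm (u n) = 1" and unc: "one_unconditional u"
    and xnorm: "\<And>n. norm (x n) = 1"
begin

lemma unc_step:
  assumes t: "\<bar>t\<bar> \<le> 1"
  shows "norm (\<Sum>i<n. (if i = k then t * b i else b i) *\<^sub>R u i) \<le> norm (\<Sum>i<n. b i *\<^sub>R u i)"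
proof -
  define e where "e i = (if i = k then -1 else (1::real))" for i
  have ne: "norm (\<Sum>i<n. (e i * b i) *\<^sub>R u i) = norm (\<Sum>i<n. b i *\<^sub>R u i)"
    using unc unfolding one_unconditional_def e_def by auto
  have "(\<Sum>i<n. (if i = k then t * b i else b i) *\<^sub>R u i)
      = (\<Sum>i<n. (((1+t)/2) * b i + ((1-t)/2) * (e i * b i)) *\<^sub>R u i)"
    by (rule sum.cong) (auto simp: e_def field_simps)
  also have "\<dots> = ((1+t)/2) *\<^sub>R (\<Sum>i<n. b i *\<^sub>R u i) + ((1-t)/2) *\<^sub>R (\<Sum>i<n. (e i * b i) *\<^sub>R u i)"
    by (simp add: scaleR_sum_right scaleR_add_left sum.distrib)
  finally have eq: "(\<Sum>i<n. (if i = k then t * b i else b i) *\<^sub>R u i) = ((1+t)/2) *\<^sub>R (\<Sum>i<n. b i *\<^sub>R u i) + ((1-t)/2) *\<^sub>R (\<Sum>i<n. (e i * b i) *\<^sub>R u i)" .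
  have "norm (\<Sum>i<n. (if i = k then t * b i else b i) *\<^sub>R u i)
      \<le> norm (((1+t)/2) *\<^sub>R (\<Sum>i<n. b i *\<^sub>R u i)) + norm (((1-t)/2) *\<^sub>R (\<Sum>i<n. (e i * b i) *\<^sub>R u i))"
    unfolding eq by (rule norm_triangle_ineq)
  also have "\<dots> = (1+t)/2 * norm (\<Sum>i<n. b i *\<^sub>R u i) + (1-t)/2 * norm (\<Sum>i<n. b i *\<^sub>R u i)"
    using t ne by simp
  also have "\<dots> = norm (\<Sum>i<n. b i *\<^sub>R u i)" by (simp add: field_simps)
  finally show ?thesis .
qed

lemma unc_mono:
  assumes "\<And>i. i < n \<Longrightarrow> \<bar>a i\<bar> \<le> \<bar>b i\<bar>"
  shows "norm (\<Sum>i<n. a i *\<^sub>R u i) \<le> norm (\<Sum>i<n. b i *\<^sub>R u i)"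
proof -
  define c where "c j i = (if i < j then a i else b i)" for j i
  have main: "norm (\<Sum>i<n. c j i *\<^sub>R u i) \<le> norm (\<Sum>i<n. b i *\<^sub>R u i)" for j
  proof (induction j)
    case 0 show ?case by (simp add: c_def)
  next
    case (Suc j)
    show ?case
    proof (cases "j < n \<and> b j \<noteq> 0")
      case True
      define t where "t = a j / b j"
      have "\<bar>t\<bar> \<le> 1" using assms True by (simp add: t_def abs_divide)
      have "(\<Sum>i<n. c (Suc j) i *\<^sub>R u i) = (\<Sum>i<n. (if i = j then t * c j i else c j i) *\<^sub>R u i)"
        by (rule sum.cong) (use True in \<open>auto simp: c_def t_def\<close>)
      then show ?thesis using unc_step[OF \<open>\<bar>t\<bar> \<le> 1\<close>, where n=n and k=j and b="c j"] Suc.IH by simp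
    next
      case False
      have "(\<Sum>i<n. c (Suc j) i *\<^sub>R u i) = (\<Sum>i<n. c j i *\<^sub>R u i)"
      proof (rule sum.cong)
        fix i assume "i \<in> {..<n}"
        then show "c (Suc j) i *\<^sub>R u i = c j i *\<^sub>R u i"
          using False assms[of j] by (cases "i = j") (auto simp: c_def)
      qed simp
      then show ?thesis using Suc.IH by simp
    qed
  qed
  have "(\<Sum>i<n. c n i *\<^sub>R u i) = (\<Sum>i<n. a i *\<^sub>R u i)" by (rule sum.cong) (auto simp: c_def)
  then show ?thesis using main[of n] by simp
qed

lemma zval_add: "zval x u (a + b) l \<le> zval x u a l + zval x u b l"
proof -
  obtain M where M: "\<forall>p\<in>set l. fst p < M \<and> snd p < M" using exM by blast
  then have M': "\<forall>p\<in>set l. fst p < M" by blast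
  have "zval x u (a + b) l = norm (\<Sum>i<M. dco x (a+b) l i *\<^sub>R u i)" by (rule zval_rep[OF M'])
  also have "\<dots> \<le> norm (\<Sum>i<M. (dco x a l i + dco x b l i) *\<^sub>R u i)"
    by (rule unc_mono) (use dco_add dco_nonneg in \<open>smt (verit)\<close>)
  also have "\<dots> \<le> norm (\<Sum>i<M. dco x a l i *\<^sub>R u i) + norm (\<Sum>i<M. dco x b l i *\<^sub>R u i)"
    by (simp add: scaleR_add_left sum.distrib norm_triangle_ineq)
  also have "\<dots> = zval x u a l + zval x u b l" using zval_rep[OF M', of x u a] zval_rep[OF M', of x u b] by simp
  finally show ?thesis .
qed

lemma zval_scale: "zval x u (r *\<^sub>R a) l = \<bar>r\<bar> * zval x u a l"
proof -
  obtain M where M: "\<forall>p\<in>set l. fst p < M \<and> snd p < M" using exM by blast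
  then have M': "\<forall>p\<in>set l. fst p < M" by blast
  have "zval x u (r *\<^sub>R a) l = norm (\<Sum>i<M. dco x (r *\<^sub>R a) l i *\<^sub>R u i)"
    by (rule zval_rep[OF M'])
  also have "\<dots> = norm (\<Sum>i<M. (\<bar>r\<bar> * dco x a l i) *\<^sub>R u i)"
    by (simp add: dco_scale)
  also have "\<dots> = norm (\<bar>r\<bar> *\<^sub>R (\<Sum>i<M. dco x a l i *\<^sub>R u i))"
    by (simp add: scaleR_sum_right)
  also have "\<dots> = \<bar>r\<bar> * zval x u a l" using zval_rep[OF M', of x u a] by simp
  finally show ?thesis .
qed


lemma fin_zb:
  assumes "\<And>i. K \<le> i \<Longrightarrow> a i = 0"
  shows "zb x u a" "znorm x u a \<le> (\<Sum>i<K. \<bar>a i\<bar>)"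
proof -
  have b: "zval x u a l \<le> (\<Sum>i<K. \<bar>a i\<bar>)" if "blocks l" for l
    using zval_fin[OF unorm xnorm that assms] .
  then show "zb x u a" unfolding zb_def bdd_above_def by blast
  show "znorm x u a \<le> (\<Sum>i<K. \<bar>a i\<bar>)" using b by (rule N_le)
qed

lemma rs_zb: "zb x u (rs m n a)"
  by (rule fin_zb[of n]) (simp add: rs_def)

lemma N_add:
  assumes "zb x u a" "zb x u b"
  shows "zb x u (a + b)" "znorm x u (a + b) \<le> znorm x u a + znorm x u b"
proof -
  have b: "zval x u (a + b) l \<le> znorm x u a + znorm x u b" if "blocks l" for l
    using zval_add[where a=a and b=b and l=l] N_ge[OF assms(1) that] N_ge[OF assms(2) that] by linarith
  then show "zb x u (a + b)" unfolding zb_def bdd_above_def by blast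
  show "znorm x u (a + b) \<le> znorm x u a + znorm x u b" using b by (rule N_le)
qed

lemma N_scale:
  assumes "zb x u a"
  shows "zb x u (r *\<^sub>R a)" "znorm x u (r *\<^sub>R a) = \<bar>r\<bar> * znorm x u a"
proof -
  have b: "zval x u (r *\<^sub>R a) l \<le> \<bar>r\<bar> * znorm x u a" if "blocks l" for l
    using zval_scale[where r=r and a=a and l=l] N_ge[OF assms that] by (simp add: mult_left_mono)
  then show zr: "zb x u (r *\<^sub>R a)" unfolding zb_def bdd_above_def by blast
  have le: "znorm x u (r *\<^sub>R a) \<le> \<bar>r\<bar> * znorm x u a" using b by (rule N_le)
  show "znorm x u (r *\<^sub>R a) = \<bar>r\<bar> * znorm x u a"
  proof (cases "r = 0")
    case True
    then show ?thesis using le N_nonneg[OF zr] by simp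
  next
    case False
    have "zval x u a l \<le> znorm x u (r *\<^sub>R a) / \<bar>r\<bar>" if "blocks l" for l
    proof -
      have "\<bar>r\<bar> * zval x u a l \<le> znorm x u (r *\<^sub>R a)"
        using zval_scale[where r=r and a=a and l=l] N_ge[OF zr that] by simp
      then show ?thesis using False by (simp add: field_simps)
    qed
    then have "znorm x u a \<le> znorm x u (r *\<^sub>R a) / \<bar>r\<bar>" by (rule N_le)
    then have "\<bar>r\<bar> * znorm x u a \<le> znorm x u (r *\<^sub>R a)" using False by (simp add: field_simps)
    then show ?thesis using le by simp
  qed
qed

lemma N_int:
  assumes "zb x u a" "m \<le> n"
  shows "norm (\<Sum>i\<in>{m..n}. a i *\<^sub>R x i) \<le> znorm x u a"
proof -
  have "zval x u a [(m,n)] = norm (\<Sum>i\<in>{m..n}. a i *\<^sub>R x i)"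
    using unorm by (simp add: zval_def)
  then show ?thesis using N_ge[OF assms(1) blocks_single[OF assms(2)]] by simp
qed

lemma N_coord:
  assumes "zb x u a"
  shows "\<bar>a i\<bar> \<le> znorm x u a"
  using N_int[OF assms, of i i] xnorm by simp

lemma Z_zb:
  assumes a: "a \<in> Zsp x u"
  shows "zb x u a"
proof -
  obtain N0 where N0: "\<And>m n. N0 \<le> m \<Longrightarrow> m \<le> n \<Longrightarrow> znorm x u (rs m n a) < 1"
    using a unfolding Zsp_iff by (meson zero_less_one)
  have "zval x u a l \<le> (\<Sum>i<N0. \<bar>a i\<bar>) + 1" if bl: "blocks l" for l
  proof -
    obtain M0 where M0: "\<forall>p\<in>set l. fst p < M0 \<and> snd p < M0" using exM by blast
    define M where "M = max M0 N0"
    have "zval x u a l = zval x u (rs 0 N0 a + rs N0 M a) l"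
    proof (rule zval_cong)
      fix p i assume "p \<in> set l" "fst p \<le> i" "i \<le> snd p"
      then have "i < M" using M0 unfolding M_def by force
      then show "a i = (rs 0 N0 a + rs N0 M a) i" by (auto simp: rs_def plus_fun_def)
    qed
    also have "\<dots> \<le> zval x u (rs 0 N0 a) l + zval x u (rs N0 M a) l"
      by (rule zval_add)
    also have "\<dots> \<le> (\<Sum>i<N0. \<bar>a i\<bar>) + 1"
    proof (rule add_mono)
      have "zval x u (rs 0 N0 a) l \<le> (\<Sum>i<N0. \<bar>rs 0 N0 a i\<bar>)"
        by (rule zval_fin[OF unorm xnorm bl]) (simp add: rs_def)
      also have "\<dots> = (\<Sum>i<N0. \<bar>a i\<bar>)" by (rule sum.cong) (auto simp: rs_def)
      finally show "zval x u (rs 0 N0 a) l \<le> (\<Sum>i<N0. \<bar>a i\<bar>)" .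
      have "zval x u (rs N0 M a) l \<le> znorm x u (rs N0 M a)" by (rule N_ge[OF rs_zb bl])
      also have "\<dots> < 1" by (rule N0) (auto simp: M_def)
      finally show "zval x u (rs N0 M a) l \<le> 1" by simp
    qed
    finally show ?thesis .
  qed
  then show ?thesis unfolding zb_def bdd_above_def by blast
qed

lemma N_zero: "znorm x u 0 = 0"
proof -
  have "zb x u 0" using rs_zb[of 0 0 0] by (simp add: rs_zero)
  then show ?thesis using N_scale(2)[of 0 0] by simp
qed

lemma lsub_Z: "lsub (Zsp x u)"
  unfolding lsub_def
proof (intro conjI ballI allI)
  show "0 \<in> Zsp x u" unfolding Zsp_iff by (simp add: rs_zero N_zero)
next
  fix a b assume a: "a \<in> Zsp x u" and b: "b \<in> Zsp x u"
  show "a + b \<in> Zsp x u" unfolding Zsp_iff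
  proof (intro allI impI)
    fix e :: real assume "e > 0"
    then have "e/2 > 0" by simp
    then obtain Na Nb where Na: "\<And>m n. Na \<le> m \<Longrightarrow> m \<le> n \<Longrightarrow> znorm x u (rs m n a) < e/2"
      and Nb: "\<And>m n. Nb \<le> m \<Longrightarrow> m \<le> n \<Longrightarrow> znorm x u (rs m n b) < e/2"
      using a b unfolding Zsp_iff by meson
    show "\<exists>N. \<forall>m n. N \<le> m \<longrightarrow> m \<le> n \<longrightarrow> znorm x u (rs m n (a + b)) < e"
    proof (intro exI allI impI)
      fix m n assume "max Na Nb \<le> m" "m \<le> n"
      then have "znorm x u (rs m n a) < e/2" "znorm x u (rs m n b) < e/2" using Na Nb by auto
      then show "znorm x u (rs m n (a + b)) < e"
        using N_add(2)[OF rs_zb rs_zb, of m n a m n b] by (simp add: rs_add)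
    qed
  qed
next
  fix c and a assume a: "a \<in> Zsp x u"
  show "c *\<^sub>R a \<in> Zsp x u" unfolding Zsp_iff
  proof (intro allI impI)
    fix e :: real assume "e > 0"
    then have "e / (\<bar>c\<bar> + 1) > 0" by simp
    then obtain Na where Na: "\<And>m n. Na \<le> m \<Longrightarrow> m \<le> n \<Longrightarrow> znorm x u (rs m n a) < e / (\<bar>c\<bar> + 1)"
      using a unfolding Zsp_iff by meson
    show "\<exists>N. \<forall>m n. N \<le> m \<longrightarrow> m \<le> n \<longrightarrow> znorm x u (rs m n (c *\<^sub>R a)) < e"
    proof (intro exI allI impI)
      fix m n assume "Na \<le> m" "m \<le> n"
      then have h: "znorm x u (rs m n a) < e / (\<bar>c\<bar> + 1)" using Na by auto
      have "znorm x u (rs m n (c *\<^sub>R a)) = \<bar>c\<bar> * znorm x u (rs m n a)"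
        by (simp add: rs_scale N_scale(2)[OF rs_zb])
      also have "\<dots> \<le> (\<bar>c\<bar> + 1) * znorm x u (rs m n a)"
        using N_nonneg[OF rs_zb] by (simp add: mult_right_mono)
      also have "\<dots> < (\<bar>c\<bar> + 1) * (e / (\<bar>c\<bar> + 1))"
        using h by (intro mult_strict_left_mono) auto
      also have "\<dots> = e" by simp
      finally show "znorm x u (rs m n (c *\<^sub>R a)) < e" .
    qed
  qed
qed

lemma Z_summable:
  assumes a: "a \<in> Zsp x u"
  shows "summable (\<lambda>j. a j *\<^sub>R x j)"
  unfolding summable_Cauchy
proof (intro allI impI)
  fix e :: real assume "e > 0"
  then obtain N0 where N0: "\<And>m n. N0 \<le> m \<Longrightarrow> m \<le> n \<Longrightarrow> znorm x u (rs m n a) < e"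
    using a unfolding Zsp_iff by meson
  show "\<exists>N. \<forall>m\<ge>N. \<forall>n. norm (\<Sum>j = m..<n. a j *\<^sub>R x j) < e"
  proof (intro exI allI impI)
    fix m n assume m: "N0 \<le> m"
    show "norm (\<Sum>j = m..<n. a j *\<^sub>R x j) < e"
    proof (cases "m < n")
      case False then show ?thesis using \<open>e > 0\<close> by simp
    next
      case True
      have "(\<Sum>j = m..<n. a j *\<^sub>R x j) = (\<Sum>j\<in>{m..n-1}. rs m n a j *\<^sub>R x j)"
        using True by (intro sum.cong) (auto simp: rs_def)
      then have "norm (\<Sum>j = m..<n. a j *\<^sub>R x j) \<le> znorm x u (rs m n a)"
        using N_int[OF rs_zb, of m "n-1" m n a] True by simp
      also have "\<dots> < e" using N0 m True by simp
      finally show ?thesis .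
    qed
  qed
qed

lemma Q_add: "a \<in> Zsp x u \<Longrightarrow> b \<in> Zsp x u \<Longrightarrow> Qmap x (a + b) = Qmap x a + Qmap x b"
  unfolding Qmap_def using Z_summable[of a] Z_summable[of b]
  by (simp add: plus_fun_def scaleR_add_left suminf_add)

lemma Q_scale: "a \<in> Zsp x u \<Longrightarrow> Qmap x (c *\<^sub>R a) = c *\<^sub>R Qmap x a"
proof -
  assume "a \<in> Zsp x u"
  then have "c *\<^sub>R (\<Sum>j. a j *\<^sub>R x j) = (\<Sum>j. c *\<^sub>R (a j *\<^sub>R x j))"
    by (intro suminf_scaleR_right Z_summable)
  then show ?thesis unfolding Qmap_def by (simp add: scaleR_fun_def)
qed

end

lemma approx_unit:
  fixes x :: "nat \<Rightarrow> 'a::real_normed_vector"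
  assumes xnorm: "\<And>n. norm (x n) = 1"
    and dense: "sphere 0 1 \<subseteq> closure (range x \<union> range (\<lambda>n. - x n))"
    and v: "norm v = 1" and e: "e > 0"
  shows "\<exists>n\<ge>m. \<exists>s. \<bar>s\<bar> = 1 \<and> norm (v - s *\<^sub>R x n) < e"
proof (rule ccontr)
  assume H0: "\<not> ?thesis"
  have H: "e \<le> norm (v - s *\<^sub>R x n)" if "m \<le> n" "\<bar>s\<bar> = 1" for n s
    using H0 that by (meson not_le)
  define F where "F = x ` {..<m} \<union> (\<lambda>n. - x n) ` {..<m}"
  have finF: "finite F" by (simp add: F_def)
  have inF: "w \<in> F" if w: "norm w = 1" "norm (w - v) < e/2" for w
  proof (rule ccontr)
    assume "w \<notin> F"
    have "open (- F)" using finF by (simp add: finite_imp_closed open_Compl)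
    then obtain d where d: "d > 0" "ball w d \<subseteq> - F"
      using \<open>w \<notin> F\<close> by (meson ComplI open_contains_ball)
    have "w \<in> closure (range x \<union> range (\<lambda>n. - x n))" using dense w by auto
    moreover have "min d (e/2 - norm (w - v)) > 0" using d w by simp
    ultimately obtain y where y: "y \<in> range x \<union> range (\<lambda>n. - x n)"
      "dist y w < min d (e/2 - norm (w - v))"
      unfolding closure_approachable by blast
    then have "y \<in> ball w d" by (simp add: dist_commute)
    then have yF: "y \<notin> F" using d by blast
    obtain n s where ns: "\<bar>s\<bar> = 1" "y = s *\<^sub>R x n"
    proof -
      from y(1) consider n where "y = x n" | n where "y = - x n" by blast
      then show ?thesis
      proof cases
        case (1 n) then show ?thesis using that[of 1 n] by simp
      next
        case (2 n) then show ?thesis using that[of "-1" n] by simp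
      qed
    qed
    have "m \<le> n"
    proof (rule ccontr)
      assume "\<not> m \<le> n"
      then have "x n \<in> F" "- x n \<in> F" unfolding F_def by auto
      moreover have "s = 1 \<or> s = -1" using ns(1) by linarith
      ultimately have "y \<in> F" using ns(2) by auto
      then show False using yF by simp
    qed
    have "norm (v - y) \<le> norm (v - w) + norm (w - y)"
      using norm_triangle_ineq[of "v - w" "w - y"] by simp
    also have "norm (w - y) < e/2 - norm (w - v)" using y(2) by (simp add: dist_norm norm_minus_commute)
    finally have "norm (v - y) < e/2" by (simp add: norm_minus_commute)
    then show False using H[OF \<open>m \<le> n\<close> ns(1)] ns(2) e by simp
  qed
  show False
  proof (cases "\<exists>y. \<forall>t. y \<noteq> t *\<^sub>R v")
    case False
    then obtain t where t: "x m = t *\<^sub>R v" by blast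
    then have "\<bar>t\<bar> = 1" using xnorm[of m] v by simp
    then have "t * t = 1" by (cases "t \<ge> 0") auto
    then have "v - t *\<^sub>R x m = 0" using t by simp
    then show False using H[of m t] \<open>\<bar>t\<bar> = 1\<close> e by simp
  next
    case True
    then obtain y where y: "\<And>t. y \<noteq> t *\<^sub>R v" by blast
    have y0: "y \<noteq> 0" using y[of 0] by simp
    have nz: "v + t *\<^sub>R y \<noteq> 0" for t
    proof
      assume a0: "v + t *\<^sub>R y = 0"
      then have "t \<noteq> 0" using v by auto
      have "t *\<^sub>R y = - v" using a0 by (simp add: eq_neg_iff_add_eq_0 add.commute)
      have "y = (1 / t) *\<^sub>R (t *\<^sub>R y)" using \<open>t \<noteq> 0\<close> by simp
      also have "\<dots> = (- 1 / t) *\<^sub>R v" using \<open>t *\<^sub>R y = - v\<close> by simp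
      finally have "y = (- 1 / t) *\<^sub>R v" .
      then show False using y by blast
    qed
    define w where "w t = (1 / norm (v + t *\<^sub>R y)) *\<^sub>R (v + t *\<^sub>R y)" for t
    have wn: "norm (w t) = 1" for t using nz[of t] by (simp add: w_def)
    have wclose: "norm (w t - v) \<le> 2 * (\<bar>t\<bar> * norm y)" for t
    proof -
      define a where "a = v + t *\<^sub>R y"
      have an: "norm a > 0" using nz[of t] by (simp add: a_def)
      have "w t - a = (1 / norm a - 1) *\<^sub>R a" by (simp add: w_def a_def algebra_simps)
      then have "norm (w t - a) = \<bar>1 / norm a - 1\<bar> * norm a" by simp
      also have "\<dots> = \<bar>1 - norm a\<bar>" using an by (simp add: abs_mult[symmetric] field_simps)
      also have "\<dots> = \<bar>norm v - norm a\<bar>" using v by simp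
      also have "\<dots> \<le> norm (v - a)" by (rule norm_triangle_ineq3)
      also have "\<dots> = \<bar>t\<bar> * norm y" by (simp add: a_def)
      finally have 1: "norm (w t - a) \<le> \<bar>t\<bar> * norm y" .
      have "norm (w t - v) \<le> norm (w t - a) + norm (a - v)"
        using norm_triangle_ineq[of "w t - a" "a - v"] by simp
      also have "norm (a - v) = \<bar>t\<bar> * norm y" by (simp add: a_def)
      finally show ?thesis using 1 by simp
    qed
    have winj: "t = t'" if "w t = w t'" for t t'
    proof -
      define k where "k = norm (v + t *\<^sub>R y) / norm (v + t' *\<^sub>R y)"
      have p1: "norm (v + t *\<^sub>R y) > 0" "norm (v + t' *\<^sub>R y) > 0" using nz by auto
      have "v + t *\<^sub>R y = norm (v + t *\<^sub>R y) *\<^sub>R w t" using p1 by (simp add: w_def)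
      also have "\<dots> = norm (v + t *\<^sub>R y) *\<^sub>R w t'" using that by simp
      also have "\<dots> = k *\<^sub>R (v + t' *\<^sub>R y)" using p1 by (simp add: w_def k_def)
      finally have eq: "(1 - k) *\<^sub>R v = (k * t' - t) *\<^sub>R y" by (simp add: algebra_simps)
      show ?thesis
      proof (cases "k = 1")
        case True
        then have "(t' - t) *\<^sub>R y = 0" using eq by simp
        then show ?thesis using y0 by simp
      next
        case False
        have "k * t' - t \<noteq> 0" using eq False v by auto
        then have "y = (1 / (k * t' - t)) *\<^sub>R ((k * t' - t) *\<^sub>R y)" by simp
        also have "\<dots> = (1 / (k * t' - t)) *\<^sub>R ((1 - k) *\<^sub>R v)" by (simp only: eq)
        also have "\<dots> = ((1 - k) / (k * t' - t)) *\<^sub>R v" by simp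
        finally have "y = ((1 - k) / (k * t' - t)) *\<^sub>R v" .
        then show ?thesis using y by blast
      qed
    qed
    define eta where "eta = e / (4 * (norm y + 1))"
    have ny1: "norm y + 1 > 0" using norm_ge_zero[of y] by linarith
    then have "4 * (norm y + 1) > 0" by simp
    then have eta: "eta > 0" using e unfolding eta_def by (rule divide_pos_pos[rotated])
    have sub: "w ` {0<..<eta} \<subseteq> F"
    proof
      fix z assume "z \<in> w ` {0<..<eta}"
      then obtain t where t: "0 < t" "t < eta" "z = w t" by auto
      have "norm (w t - v) \<le> 2 * (t * norm y)" using wclose[of t] t by simp
      also have "\<dots> \<le> 2 * (t * (norm y + 1))" using t by simp
      also have "\<dots> < 2 * (eta * (norm y + 1))"
        using t ny1 by (intro mult_strict_left_mono mult_strict_right_mono) auto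
      also have "\<dots> = e / 2"
      proof -
        have c2: "4 + norm y * 4 \<noteq> 0" "norm y * 4 + 4 \<noteq> 0" "1 + norm y \<noteq> 0" "norm y + 1 \<noteq> 0" using ny1 by linarith+
        show ?thesis using c2 by (simp add: eta_def field_simps)
      qed
      finally have "norm (w t - v) < e / 2" .
      then show "z \<in> F" using inF[OF wn] t by simp
    qed
    have "inj_on w {0<..<eta}" using winj by (auto simp: inj_on_def)
    then have "finite {0<..<eta}" using finite_subset[OF sub finF] finite_imageD by blast
    then show False using infinite_Ioo[OF eta] by simp
  qed
qed


lemma approx_step:
  fixes x :: "nat \<Rightarrow> 'a::real_normed_vector"
  assumes xnorm: "\<And>n. norm (x n) = 1"
    and dense: "sphere 0 1 \<subseteq> closure (range x \<union> range (\<lambda>n. - x n))"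
  shows "\<exists>n c. m \<le> n \<and> \<bar>c\<bar> \<le> norm r \<and> norm (r - c *\<^sub>R x n) \<le> norm r / 2"
proof (cases "r = 0")
  case True then show ?thesis by (intro exI[of _ m] exI[of _ 0]) simp
next
  case False
  define v where "v = (1 / norm r) *\<^sub>R r"
  have nr: "norm r > 0" using False by simp
  have v: "norm v = 1" using nr by (simp add: v_def)
  obtain n s where ns: "m \<le> n" "\<bar>s\<bar> = 1" "norm (v - s *\<^sub>R x n) < 1/2"
    using approx_unit[OF xnorm dense v, of "1/2" m] by auto
  have rv: "r = norm r *\<^sub>R v" using nr by (simp add: v_def)
  have "r - (s * norm r) *\<^sub>R x n = norm r *\<^sub>R (v - s *\<^sub>R x n)"
    by (subst rv) (simp add: algebra_simps)
  then have "norm (r - (s * norm r) *\<^sub>R x n) = norm r * norm (v - s *\<^sub>R x n)" by simp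
  also have "\<dots> \<le> norm r * (1/2)" using ns(3) nr by (intro mult_left_mono) auto
  finally show ?thesis using ns by (intro exI[of _ n] exI[of _ "s * norm r"]) (auto simp: abs_mult)
qed

lemma geo_sum: "(\<Sum>k\<in>{K..<K+d}. (1/2::real)^k) = 2 * (1/2)^K - 2 * (1/2)^(K+d)"
proof (induction d)
  case 0 then show ?case by simp
next
  case (Suc d)
  have "(\<Sum>k\<in>{K..<K+Suc d}. (1/2::real)^k) = (\<Sum>k\<in>{K..<K+d}. (1/2)^k) + (1/2)^(K+d)"
    by (simp add: sum.atLeastLessThan_Suc)
  also have "\<dots> = 2*(1/2)^K - 2*(1/2)^(K+d) + (1/2)^(K+d)" using Suc.IH by simp
  also have "\<dots> = 2*(1/2)^K - 2*(1/2::real)^(K + Suc d)" by simp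
  finally show ?case .
qed

lemma geo_bound: "(\<Sum>k\<in>{K..<q}. (1/2::real)^k) \<le> 2 * (1/2)^K"
proof (cases "K \<le> q")
  case True
  then obtain d where "q = K + d" using le_Suc_ex by blast
  then show ?thesis using geo_sum[of K d] by simp
next
  case False then show ?thesis by simp
qed

context
  fixes x :: "nat \<Rightarrow> 'a::banach" and u :: "nat \<Rightarrow> 'b::banach"
  assumes unorm: "\<And>n. norm (u n) = 1" and unc: "one_unconditional u"
    and xnorm: "\<And>n. norm (x n) = 1"
    and dense: "sphere 0 1 \<subseteq> closure (range x \<union> range (\<lambda>n. - x n))"
begin

lemma lift: "\<exists>z\<in>Zsp x u. Qmap x z = y \<and> znorm x u z \<le> 2 * norm y"
proof -
  have "\<forall>q. \<exists>p. snd q \<le> fst p \<and> \<bar>snd p\<bar> \<le> norm (fst q) \<and> norm (fst q - snd p *\<^sub>R x (fst p)) \<le> norm (fst q) / 2"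
    using approx_step[OF xnorm dense] by fastforce
  then obtain P where P: "\<And>q. snd q \<le> fst (P q)" "\<And>q. \<bar>snd (P q)\<bar> \<le> norm (fst q)"
    "\<And>q. norm (fst q - snd (P q) *\<^sub>R x (fst (P q))) \<le> norm (fst q) / 2"
    by metis
  define st where "st = rec_nat (y, 0) (\<lambda>k q. (fst q - snd (P q) *\<^sub>R x (fst (P q)), Suc (fst (P q))))"
  have st0: "st 0 = (y, 0)" by (simp add: st_def)
  have stS: "st (Suc k) = (fst (st k) - snd (P (st k)) *\<^sub>R x (fst (P (st k))), Suc (fst (P (st k))))" for k
    by (simp add: st_def)
  define r where "r k = fst (st k)" for k
  define n where "n k = fst (P (st k))" for k
  define c where "c k = snd (P (st k))" for k
  have rS: "r (Suc k) = r k - c k *\<^sub>R x (n k)" for k by (simp add: r_def c_def n_def stS)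
  have r0: "r 0 = y" by (simp add: r_def st0)
  have nS: "Suc (n k) \<le> n (Suc k)" for k
    using P(1)[of "st (Suc k)"] by (simp add: n_def stS)
  have sm: "strict_mono n" unfolding strict_mono_Suc_iff using nS by (simp add: Suc_le_eq)
  have injn: "inj n" using sm by (rule strict_mono_imp_inj_on)
  have cr: "\<bar>c k\<bar> \<le> norm (r k)" for k using P(2)[of "st k"] by (simp add: c_def r_def)
  have rr: "norm (r (Suc k)) \<le> norm (r k) / 2" for k
    using P(3)[of "st k"] by (simp add: r_def c_def n_def stS)
  have rb: "norm (r k) \<le> norm y * (1/2)^k" for k
  proof (induction k)
    case 0 then show ?case by (simp add: r0)
  next
    case (Suc k) then show ?case using rr[of k] by simp
  qed
  have cb: "\<bar>c k\<bar> \<le> norm y * (1/2)^k" for k using cr[of k] rb[of k] by simp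
  have part: "y - r k = (\<Sum>i<k. c i *\<^sub>R x (n i))" for k
  proof (induction k)
    case 0 then show ?case by (simp add: r0)
  next
    case (Suc k) then show ?case by (simp add: rS algebra_simps)
  qed
  define z where "z j = (if j \<in> range n then c (inv n j) else 0)" for j
  have zn: "z (n k) = c k" for k using injn by (simp add: z_def)
  have reidx: "(\<Sum>j\<in>S. G (z j) j) = (\<Sum>k\<in>n -` S. G (c k) (n k))"
    if S: "finite S" and G0: "\<And>j. G 0 j = (0::'c::comm_monoid_add)" for S G
  proof -
    have "(\<Sum>j\<in>S. G (z j) j) = (\<Sum>j\<in>S \<inter> range n. G (z j) j)"
      by (rule sum.mono_neutral_right) (use S G0 in \<open>auto simp: z_def\<close>)
    also have "S \<inter> range n = n ` (n -` S)" by auto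
    also have "(\<Sum>j\<in>n ` (n -` S). G (z j) j) = (\<Sum>k\<in>n -` S. G (z (n k)) (n k))"
      by (rule sum.reindex_cong[OF inj_on_subset[OF injn] refl refl]) auto
    finally show ?thesis by (simp add: zn)
  qed
  have fin_vim: "finite (n -` S)" if "finite S" for S
    using that injn by (simp add: finite_vimageI)
  have tail: "(\<Sum>j\<in>{p..<q}. \<bar>z j\<bar>) \<le> norm y * (2 * (1/2)^K)" if "K = 0 \<or> n K \<le> p" for p q K
  proof -
    have "(\<Sum>j\<in>{p..<q}. \<bar>z j\<bar>) = (\<Sum>k\<in>n -` {p..<q}. \<bar>c k\<bar>)"
      using reidx[of "{p..<q}" "\<lambda>v j. \<bar>v\<bar>"] by simp
    also have "\<dots> \<le> (\<Sum>k\<in>{K..<q}. \<bar>c k\<bar>)"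
    proof (rule sum_mono2)
      show "n -` {p..<q} \<subseteq> {K..<q}"
      proof
        fix k assume "k \<in> n -` {p..<q}"
        then have k: "p \<le> n k" "n k < q" by auto
        have "K \<le> k"
        proof (cases "K = 0")
          case False
          then have "n K \<le> n k" using k(1) that by simp
          then show ?thesis using sm by (simp add: strict_mono_less_eq)
        qed simp
        moreover have "k < q" using seq_suble[OF sm, of k] k(2) by simp
        ultimately show "k \<in> {K..<q}" by simp
      qed
    qed auto
    also have "\<dots> \<le> (\<Sum>k\<in>{K..<q}. norm y * (1/2)^k)" by (rule sum_mono) (rule cb)
    also have "\<dots> = norm y * (\<Sum>k\<in>{K..<q}. (1/2)^k)" by (simp add: sum_distrib_left)
    also have "\<dots> \<le> norm y * (2 * (1/2)^K)" by (rule mult_left_mono[OF geo_bound]) simp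
    finally show ?thesis .
  qed
  have zZ: "z \<in> Zsp x u" unfolding Zsp_iff
  proof (intro allI impI)
    fix e :: real assume e: "e > 0"
    have "\<exists>K. (1/2::real)^K < e / (2 * norm y + 1)"
    proof (rule real_arch_pow_inv)
      have "2 * norm y + 1 > 0" using norm_ge_zero[of y] by linarith
      then show "e / (2 * norm y + 1) > 0" using e by simp
    qed simp
    then obtain K where K: "(1/2::real)^K < e / (2 * norm y + 1)" by blast
    have ny: "2 * norm y + 1 > 0" using norm_ge_zero[of y] by linarith
    show "\<exists>N. \<forall>p q. N \<le> p \<longrightarrow> p \<le> q \<longrightarrow> znorm x u (rs p q z) < e"
    proof (intro exI allI impI)
      fix p q assume pq: "n K \<le> p" "p \<le> q"
      have "znorm x u (rs p q z) \<le> (\<Sum>i<q. \<bar>rs p q z i\<bar>)"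
        by (rule fin_zb(2)[OF unorm unc xnorm]) (simp add: rs_def)
      also have "\<dots> = (\<Sum>i\<in>{p..<q}. \<bar>z i\<bar>)"
      proof -
        have "(\<Sum>i<q. \<bar>rs p q z i\<bar>) = (\<Sum>i\<in>{..<q}. if i \<in> {p..<q} then \<bar>z i\<bar> else 0)"
          by (rule sum.cong) (auto simp: rs_def)
        also have "\<dots> = (\<Sum>i\<in>{..<q} \<inter> {p..<q}. \<bar>z i\<bar>)" by (simp add: sum.inter_restrict)
        also have "{..<q} \<inter> {p..<q} = {p..<q}" by auto
        finally show ?thesis .
      qed
      also have "\<dots> \<le> norm y * (2 * (1/2)^K)" using tail pq(1) by blast
      also have "\<dots> < e"
      proof -
        have "norm y * (2 * (1/2)^K) \<le> (2 * norm y + 1) * (1/2)^K" by (simp add: algebra_simps)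
        also have "\<dots> < (2 * norm y + 1) * (e / (2 * norm y + 1))"
          using K ny by (intro mult_strict_left_mono) auto
        also have "\<dots> = e" using ny by simp
        finally show ?thesis .
      qed
      finally show "znorm x u (rs p q z) < e" .
    qed
  qed
  have Qz: "Qmap x z = y"
  proof -
    have sumz: "summable (\<lambda>j. z j *\<^sub>R x j)" by (rule Z_summable[OF unorm unc xnorm zZ])
    have L1: "(\<lambda>q. \<Sum>j<q. z j *\<^sub>R x j) \<longlonglongrightarrow> Qmap x z"
      unfolding Qmap_def by (rule summable_LIMSEQ[OF sumz])
    have sm2: "strict_mono (\<lambda>k. Suc (n k))" using sm by (simp add: strict_mono_def)
    have L2: "(\<lambda>k. \<Sum>j<Suc (n k). z j *\<^sub>R x j) \<longlonglongrightarrow> Qmap x z"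
      using LIMSEQ_subseq_LIMSEQ[OF L1 sm2] by (simp add: o_def)
    have eqk: "(\<Sum>j<Suc (n k). z j *\<^sub>R x j) = y - r (Suc k)" for k
    proof -
      have "(\<Sum>j<Suc (n k). z j *\<^sub>R x j) = (\<Sum>i\<in>n -` {..<Suc (n k)}. c i *\<^sub>R x (n i))"
        using reidx[of "{..<Suc (n k)}" "\<lambda>v j. v *\<^sub>R x j"] by simp
      also have "n -` {..<Suc (n k)} = {..<Suc k}"
        using sm by (auto simp: less_Suc_eq_le strict_mono_less_eq)
      finally show ?thesis using part[of "Suc k"] by simp
    qed
    have r0l: "(\<lambda>k. r (Suc k)) \<longlonglongrightarrow> 0"
    proof (rule Lim_null_comparison)
      show "\<forall>\<^sub>F k in sequentially. norm (r (Suc k)) \<le> norm y * (1/2)^(Suc k)"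
        using rb by (intro always_eventually allI) blast
      have "(\<lambda>k. (1/2::real)^(Suc k)) \<longlonglongrightarrow> 0"
        by (rule LIMSEQ_Suc[OF LIMSEQ_power_zero]) simp
      then show "(\<lambda>k. norm y * (1/2)^(Suc k)) \<longlonglongrightarrow> 0" by (rule tendsto_mult_right_zero)
    qed
    have "(\<lambda>k. y - r (Suc k)) \<longlonglongrightarrow> y - 0" by (intro tendsto_intros r0l)
    then have "(\<lambda>k. \<Sum>j<Suc (n k). z j *\<^sub>R x j) \<longlonglongrightarrow> y" using eqk by simp
    then show ?thesis using L2 LIMSEQ_unique by blast
  qed
  have Nz: "znorm x u z \<le> 2 * norm y"
  proof (rule N_le)
    fix l assume bl: "blocks l"
    obtain M where M: "\<forall>p\<in>set l. fst p < M \<and> snd p < M" using exM by blast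
    have "zval x u z l = zval x u (rs 0 M z) l"
      by (rule zval_cong) (use M in \<open>force simp: rs_def\<close>)
    also have "\<dots> \<le> (\<Sum>i<M. \<bar>rs 0 M z i\<bar>)"
      by (rule zval_fin[OF unorm xnorm bl]) (simp add: rs_def)
    also have "\<dots> = (\<Sum>i\<in>{0..<M}. \<bar>z i\<bar>)" by (simp add: rs_def atLeast0LessThan)
    also have "\<dots> \<le> norm y * (2 * (1/2)^0)" by (rule tail) simp
    finally show "zval x u z l \<le> 2 * norm y" by simp
  qed
  show ?thesis using zZ Qz Nz by blast
qed

end

context
  fixes x :: "nat \<Rightarrow> 'a::banach" and u :: "nat \<Rightarrow> 'b::banach"
  assumes unorm: "\<And>n. norm (u n) = 1" and unc: "one_unconditional u"
    and xnorm: "\<And>n. norm (x n) = 1"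
    and dense: "sphere 0 1 \<subseteq> closure (range x \<union> range (\<lambda>n. - x n))"
begin

lemma zbZ: "a \<in> Zsp x u \<Longrightarrow> zb x u a"
  by (rule Z_zb[OF unorm unc xnorm])

lemma NnZ: "a \<in> Zsp x u \<Longrightarrow> 0 \<le> znorm x u a"
  by (rule N_nonneg[OF zbZ])

lemma NaddZ: "a \<in> Zsp x u \<Longrightarrow> b \<in> Zsp x u \<Longrightarrow> znorm x u (a + b) \<le> znorm x u a + znorm x u b"
  by (rule N_add(2)[OF unorm unc xnorm zbZ zbZ])

lemma NscZ: "a \<in> Zsp x u \<Longrightarrow> znorm x u (r *\<^sub>R a) = \<bar>r\<bar> * znorm x u a"
  by (rule N_scale(2)[OF unorm unc xnorm zbZ])

lemma N0: "znorm x u 0 = 0" by (rule N_zero[OF unorm unc xnorm])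

lemma lsubZ: "lsub (Zsp x u)" by (rule lsub_Z[OF unorm unc xnorm])

lemma Qadd: "a \<in> Zsp x u \<Longrightarrow> b \<in> Zsp x u \<Longrightarrow> Qmap x (a + b) = Qmap x a + Qmap x b"
  by (rule Q_add[OF unorm unc xnorm])

lemma Qsc: "a \<in> Zsp x u \<Longrightarrow> Qmap x (c *\<^sub>R a) = c *\<^sub>R Qmap x a"
  by (rule Q_scale[OF unorm unc xnorm])

lemma Q0: "Qmap x 0 = 0" by (simp add: Qmap_def zero_fun_def)

lemma liftZ: "\<exists>z\<in>Zsp x u. Qmap x z = y \<and> znorm x u z \<le> 2 * norm y"
  by (rule lift[OF unorm unc xnorm dense])

lemma lsubW: "lsub (Wsp x u)"
  unfolding lsub_def
proof (intro conjI ballI allI)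
  show "0 \<in> Wsp x u" using lsubD(1)[OF lsubZ] Q0 by (simp add: Wsp_def)
next
  fix a b assume "a \<in> Wsp x u" "b \<in> Wsp x u"
  then have "a \<in> Zsp x u" "b \<in> Zsp x u" "Qmap x a = 0" "Qmap x b = 0" by (auto simp: Wsp_def)
  then show "a + b \<in> Wsp x u" using lsubD(2)[OF lsubZ] Qadd by (simp add: Wsp_def)
next
  fix c a assume "a \<in> Wsp x u"
  then have "a \<in> Zsp x u" "Qmap x a = 0" by (auto simp: Wsp_def)
  then show "c *\<^sub>R a \<in> Wsp x u" using lsubD(3)[OF lsubZ] Qsc by (simp add: Wsp_def)
qed

lemma WZ: "Wsp x u \<subseteq> Zsp x u" unfolding Wsp_def by (rule Collect_restrict)

section \<open>Functionals\<close>

lemma bf_D: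
  assumes "f \<in> bdd_funcs S N"
  shows "\<forall>a\<in>S. \<forall>b\<in>S. f (\<lambda>i. a i + b i) = f a + f b" "\<forall>r. \<forall>a\<in>S. f (\<lambda>i. r * a i) = r * f a"
    "\<exists>C. \<forall>a\<in>S. \<bar>f a\<bar> \<le> C * N a" "\<forall>a. a \<notin> S \<longrightarrow> f a = 0"
proof -
  have H: "(\<forall>a\<in>S. \<forall>b\<in>S. f (\<lambda>i. a i + b i) = f a + f b) \<and> (\<forall>r. \<forall>a\<in>S. f (\<lambda>i. r * a i) = r * f a)
    \<and> (\<exists>C. \<forall>a\<in>S. \<bar>f a\<bar> \<le> C * N a) \<and> (\<forall>a. a \<notin> S \<longrightarrow> f a = 0)"
    using assms unfolding bdd_funcs_def by (rule CollectD)
  show "\<forall>a\<in>S. \<forall>b\<in>S. f (\<lambda>i. a i + b i) = f a + f b" by (rule conjunct1[OF H])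
  show "\<forall>r. \<forall>a\<in>S. f (\<lambda>i. r * a i) = r * f a" by (rule conjunct1[OF conjunct2[OF H]])
  show "\<exists>C. \<forall>a\<in>S. \<bar>f a\<bar> \<le> C * N a" by (rule conjunct1[OF conjunct2[OF conjunct2[OF H]]])
  show "\<forall>a. a \<notin> S \<longrightarrow> f a = 0" by (rule conjunct2[OF conjunct2[OF conjunct2[OF H]]])
qed

lemma bf_add: assumes "f \<in> bdd_funcs S N" "a \<in> S" "b \<in> S" shows "f (a + b) = f a + f b"
proof -
  have "f (\<lambda>i. a i + b i) = f a + f b" using bf_D(1)[OF assms(1)] assms(2,3) by blast
  moreover have e: "a + b = (\<lambda>i. a i + b i)" by (simp add: plus_fun_def)
  ultimately show ?thesis by (simp only: e)
qed

lemma bf_scale: assumes "f \<in> bdd_funcs S N" "a \<in> S" shows "f (r *\<^sub>R a) = r * f a"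
proof -
  have "f (\<lambda>i. r * a i) = r * f a" using bf_D(2)[OF assms(1)] assms(2) by blast
  moreover have e: "r *\<^sub>R a = (\<lambda>i. r * a i)" by (simp add: scaleR_fun_def)
  ultimately show ?thesis by (simp only: e)
qed

lemma bf_out: "f \<in> bdd_funcs S N \<Longrightarrow> a \<notin> S \<Longrightarrow> f a = 0"
  using bf_D(4) by blast

lemma bf_bound:
  assumes "f \<in> bdd_funcs S (znorm x u)" "S \<subseteq> Zsp x u"
  shows "\<exists>C\<ge>0. \<forall>a\<in>S. \<bar>f a\<bar> \<le> C * znorm x u a"
proof -
  obtain C where C: "\<forall>a\<in>S. \<bar>f a\<bar> \<le> C * znorm x u a" using bf_D(3)[OF assms(1)] by blast
  have "\<forall>a\<in>S. \<bar>f a\<bar> \<le> max C 0 * znorm x u a"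
  proof
    fix a assume "a \<in> S"
    then have "\<bar>f a\<bar> \<le> C * znorm x u a" "0 \<le> znorm x u a" using C NnZ assms(2) by auto
    moreover have "C * znorm x u a \<le> max C 0 * znorm x u a" using \<open>0 \<le> znorm x u a\<close>
      by (intro mult_right_mono) auto
    ultimately show "\<bar>f a\<bar> \<le> max C 0 * znorm x u a" by linarith
  qed
  then show ?thesis by (intro exI[of _ "max C 0"]) auto
qed

lemma bf_zero: "f \<in> bdd_funcs S N \<Longrightarrow> lsub S \<Longrightarrow> f 0 = 0"
proof -
  assume a: "f \<in> bdd_funcs S N" "lsub S"
  have "f (0 *\<^sub>R 0) = 0 * f 0" using bf_scale[OF a(1) lsubD(1)[OF a(2)]] by blast
  then show ?thesis by simp
qed

lemma dn_facts:
  assumes f: "f \<in> bdd_funcs S (znorm x u)" and S: "S \<subseteq> Zsp x u" "lsub S"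
  shows "bdd_above {\<bar>f a\<bar> | a. a \<in> S \<and> znorm x u a \<le> 1}" "0 \<in> {\<bar>f a\<bar> | a. a \<in> S \<and> znorm x u a \<le> 1}"
proof -
  obtain C where C: "C \<ge> 0" "\<forall>a\<in>S. \<bar>f a\<bar> \<le> C * znorm x u a" using bf_bound[OF f S(1)] by blast
  have "\<bar>f a\<bar> \<le> C" if "a \<in> S" "znorm x u a \<le> 1" for a
  proof -
    have "\<bar>f a\<bar> \<le> C * znorm x u a" using C that by blast
    also have "\<dots> \<le> C * 1" using that C by (intro mult_left_mono) auto
    finally show ?thesis by simp
  qed
  then show "bdd_above {\<bar>f a\<bar> | a. a \<in> S \<and> znorm x u a \<le> 1}" unfolding bdd_above_def by blast
  have "\<bar>f 0\<bar> = 0" using bf_zero[OF f S(2)] by simp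
  moreover have "(0::nat\<Rightarrow>real) \<in> S" "znorm x u 0 \<le> 1" using lsubD(1)[OF S(2)] N0 by auto
  ultimately show "0 \<in> {\<bar>f a\<bar> | a. a \<in> S \<and> znorm x u a \<le> 1}" by force
qed

lemma dn_nonneg:
  assumes f: "f \<in> bdd_funcs S (znorm x u)" and S: "S \<subseteq> Zsp x u" "lsub S"
  shows "0 \<le> dnorm S (znorm x u) f"
  unfolding dnorm_def using dn_facts[OF f S] by (rule cSup_upper[rotated])

lemma dn_bound:
  assumes f: "f \<in> bdd_funcs S (znorm x u)" and S: "S \<subseteq> Zsp x u" "lsub S" and a: "a \<in> S"
  shows "\<bar>f a\<bar> \<le> dnorm S (znorm x u) f * znorm x u a"
proof (cases "znorm x u a = 0")
  case True
  obtain C where C: "C \<ge> 0" "\<forall>a\<in>S. \<bar>f a\<bar> \<le> C * znorm x u a" using bf_bound[OF f S(1)] by blast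
  then show ?thesis using True a by auto
next
  case False
  have aZ: "a \<in> Zsp x u" using a S by auto
  then have pos: "znorm x u a > 0" using False NnZ[OF aZ] by simp
  define a' where "a' = (1 / znorm x u a) *\<^sub>R a"
  have a'S: "a' \<in> S" using lsubD(3)[OF S(2) a] by (simp add: a'_def)
  have "znorm x u a' = 1" using NscZ[OF aZ] pos by (simp add: a'_def)
  then have "\<bar>f a'\<bar> \<le> dnorm S (znorm x u) f"
    unfolding dnorm_def using a'S by (intro cSup_upper dn_facts(1)[OF f S]) auto
  moreover have "f a' = f a / znorm x u a" using bf_scale[OF f a] by (simp add: a'_def)
  ultimately have "\<bar>f a\<bar> / znorm x u a \<le> dnorm S (znorm x u) f" using pos by (simp add: abs_divide)
  then show ?thesis using pos by (simp add: divide_le_eq)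
qed

lemma dn_le:
  assumes S: "S \<subseteq> Zsp x u" "lsub S" and B: "B \<ge> 0"
    and bd: "\<And>a. a \<in> S \<Longrightarrow> \<bar>f a\<bar> \<le> B * znorm x u a"
  shows "dnorm S (znorm x u) f \<le> B"
  unfolding dnorm_def
proof (rule cSup_least)
  show "{\<bar>f a\<bar> | a. a \<in> S \<and> znorm x u a \<le> 1} \<noteq> {}" using lsubD(1)[OF S(2)] N0 by force
next
  fix t assume "t \<in> {\<bar>f a\<bar> | a. a \<in> S \<and> znorm x u a \<le> 1}"
  then obtain a where a: "a \<in> S" "znorm x u a \<le> 1" "t = \<bar>f a\<bar>" by blast
  have "\<bar>f a\<bar> \<le> B * znorm x u a" using bd a by blast
  also have "\<dots> \<le> B * 1" using a B by (intro mult_left_mono) auto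
  finally show "t \<le> B" using a by simp
qed


lemma bf_intro:
  assumes h1: "\<And>a b. a\<in>S \<Longrightarrow> b\<in>S \<Longrightarrow> f (a + b) = f a + f b"
    and h2: "\<And>r a. a\<in>S \<Longrightarrow> f (r *\<^sub>R a) = r * f a"
    and h3: "\<And>a. a\<in>S \<Longrightarrow> \<bar>f a\<bar> \<le> C * N a"
    and h4: "\<And>a. a\<notin>S \<Longrightarrow> f a = 0"
  shows "f \<in> bdd_funcs S N"
proof -
  have g1: "\<forall>a\<in>S. \<forall>b\<in>S. f (\<lambda>i. a i + b i) = f a + f b"
  proof (intro ballI)
    fix a b assume ab: "a \<in> S" "b \<in> S"
    have e: "(\<lambda>i. a i + b i) = a + b" by (simp add: plus_fun_def)
    show "f (\<lambda>i. a i + b i) = f a + f b" unfolding e using h1[OF ab] .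
  qed
  have g2: "\<forall>r. \<forall>a\<in>S. f (\<lambda>i. r * a i) = r * f a"
  proof (intro allI ballI)
    fix r a assume a: "a \<in> S"
    have e: "(\<lambda>i. r * a i) = r *\<^sub>R a" by (simp add: scaleR_fun_def)
    show "f (\<lambda>i. r * a i) = r * f a" unfolding e using h2[OF a] .
  qed
  have g3: "\<exists>C. \<forall>a\<in>S. \<bar>f a\<bar> \<le> C * N a" using h3 by blast
  have g4: "\<forall>a. a \<notin> S \<longrightarrow> f a = 0" using h4 by blast
  show ?thesis unfolding bdd_funcs_def mem_Collect_eq using g1 g2 g3 g4 by (intro conjI)
qed

lemma bfC:
  assumes "f \<in> bdd_funcs S N"
  obtains C where "\<And>a. a\<in>S \<Longrightarrow> \<bar>f a\<bar> \<le> C * N a"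
  using bf_D(3)[OF assms] by blast

lemma E_lin:
  assumes f: "f \<in> bdd_funcs S N" and g: "g \<in> bdd_funcs S N"
  shows "(\<lambda>a. p * f a + q * g a) \<in> bdd_funcs S N"
proof -
  obtain C1 where C1: "\<And>a. a\<in>S \<Longrightarrow> \<bar>f a\<bar> \<le> C1 * N a" using bfC[OF f] by blast
  obtain C2 where C2: "\<And>a. a\<in>S \<Longrightarrow> \<bar>g a\<bar> \<le> C2 * N a" using bfC[OF g] by blast
  show ?thesis
  proof (rule bf_intro[where C="\<bar>p\<bar> * C1 + \<bar>q\<bar> * C2"])
    fix a b assume "a \<in> S" "b \<in> S"
    then show "p * f (a + b) + q * g (a + b) = (p * f a + q * g a) + (p * f b + q * g b)"
      using bf_add[OF f] bf_add[OF g] by (simp add: algebra_simps)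
  next
    fix r a assume "a \<in> S"
    then show "p * f (r *\<^sub>R a) + q * g (r *\<^sub>R a) = r * (p * f a + q * g a)"
      using bf_scale[OF f] bf_scale[OF g] by (simp add: algebra_simps)
  next
    fix a assume a: "a \<in> S"
    have "\<bar>p * f a + q * g a\<bar> \<le> \<bar>p\<bar> * \<bar>f a\<bar> + \<bar>q\<bar> * \<bar>g a\<bar>"
      by (metis abs_mult abs_triangle_ineq)
    also have "\<dots> \<le> \<bar>p\<bar> * (C1 * N a) + \<bar>q\<bar> * (C2 * N a)"
      using C1[OF a] C2[OF a] by (intro add_mono mult_left_mono) auto
    also have "\<dots> = (\<bar>p\<bar> * C1 + \<bar>q\<bar> * C2) * N a" by (simp add: algebra_simps)
    finally show "\<bar>p * f a + q * g a\<bar> \<le> (\<bar>p\<bar> * C1 + \<bar>q\<bar> * C2) * N a" .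
  next
    fix a assume "a \<notin> S"
    then show "p * f a + q * g a = 0" using bf_out[OF f] bf_out[OF g] by simp
  qed
qed

lemma E_diff: "f \<in> bdd_funcs S N \<Longrightarrow> g \<in> bdd_funcs S N \<Longrightarrow> (\<lambda>a. f a - g a) \<in> bdd_funcs S N"
  using E_lin[of f S N g 1 "-1"] by simp

lemma E_add: "f \<in> bdd_funcs S N \<Longrightarrow> g \<in> bdd_funcs S N \<Longrightarrow> (\<lambda>a. f a + g a) \<in> bdd_funcs S N"
  using E_lin[of f S N g 1 1] by simp

lemma cf_sum: "(\<lambda>a. \<Sum>j<n. c j * coord_fun (Zsp x u) j a) \<in> bdd_funcs (Zsp x u) (znorm x u)"
proof (rule bf_intro[where C="\<Sum>j<n. \<bar>c j\<bar>"])
  fix a b assume ab: "a \<in> Zsp x u" "b \<in> Zsp x u"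
  then have "a + b \<in> Zsp x u" using lsubD(2)[OF lsubZ] by blast
  then show "(\<Sum>j<n. c j * coord_fun (Zsp x u) j (a + b)) = (\<Sum>j<n. c j * coord_fun (Zsp x u) j a) + (\<Sum>j<n. c j * coord_fun (Zsp x u) j b)"
    using ab by (simp add: coord_fun_def plus_fun_def sum.distrib algebra_simps)
next
  fix r a assume a: "a \<in> Zsp x u"
  then have "r *\<^sub>R a \<in> Zsp x u" using lsubD(3)[OF lsubZ] by blast
  then show "(\<Sum>j<n. c j * coord_fun (Zsp x u) j (r *\<^sub>R a)) = r * (\<Sum>j<n. c j * coord_fun (Zsp x u) j a)"
    using a by (simp add: coord_fun_def scaleR_fun_def sum_distrib_left algebra_simps)
next
  fix a assume a: "a \<in> Zsp x u"
  have "\<bar>\<Sum>j<n. c j * coord_fun (Zsp x u) j a\<bar> \<le> (\<Sum>j<n. \<bar>c j * coord_fun (Zsp x u) j a\<bar>)"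
    by (rule sum_abs)
  also have "\<dots> \<le> (\<Sum>j<n. \<bar>c j\<bar> * znorm x u a)"
  proof (rule sum_mono)
    fix j
    have "\<bar>a j\<bar> \<le> znorm x u a" by (rule N_coord[OF unorm unc xnorm zbZ[OF a]])
    then show "\<bar>c j * coord_fun (Zsp x u) j a\<bar> \<le> \<bar>c j\<bar> * znorm x u a"
      using a by (simp add: coord_fun_def abs_mult mult_left_mono)
  qed
  also have "\<dots> = (\<Sum>j<n. \<bar>c j\<bar>) * znorm x u a" by (simp add: sum_distrib_right)
  finally show "\<bar>\<Sum>j<n. c j * coord_fun (Zsp x u) j a\<bar> \<le> (\<Sum>j<n. \<bar>c j\<bar>) * znorm x u a" .
next
  fix a assume "a \<notin> Zsp x u"
  then show "(\<Sum>j<n. c j * coord_fun (Zsp x u) j a) = 0" by (simp add: coord_fun_def)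
qed

lemma pad: "(n::nat) \<le> m \<Longrightarrow> (\<Sum>j<n. c j * h j) = (\<Sum>j<m. (if j < n then c j else 0) * (h j :: real))"
proof -
  assume nm: "n \<le> m"
  have "(\<Sum>j<m. (if j < n then c j else 0) * h j) = (\<Sum>j\<in>{..<m}. if j \<in> {..<n} then c j * h j else 0)"
    by (rule sum.cong) auto
  also have "\<dots> = (\<Sum>j\<in>{..<m} \<inter> {..<n}. c j * h j)" by (rule sum.inter_restrict[symmetric]) simp
  also have "{..<m} \<inter> {..<n} = {..<n}" using nm by auto
  finally show ?thesis by simp
qed

lemma dn_sub:
  assumes F: "F \<in> bdd_funcs (Zsp x u) (znorm x u)" and G: "G \<in> bdd_funcs (Zsp x u) (znorm x u)"
  shows "dnorm (Zsp x u) (znorm x u) (\<lambda>a. F a - G a) \<le> dnorm (Zsp x u) (znorm x u) F + dnorm (Zsp x u) (znorm x u) G"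
proof (rule dn_le[OF subset_refl lsubZ])
  show "0 \<le> dnorm (Zsp x u) (znorm x u) F + dnorm (Zsp x u) (znorm x u) G"
    using dn_nonneg[OF F subset_refl lsubZ] dn_nonneg[OF G subset_refl lsubZ] by simp
next
  fix a assume a: "a \<in> Zsp x u"
  have "\<bar>F a - G a\<bar> \<le> \<bar>F a\<bar> + \<bar>G a\<bar>" by (rule abs_triangle_ineq4)
  also have "\<dots> \<le> dnorm (Zsp x u) (znorm x u) F * znorm x u a + dnorm (Zsp x u) (znorm x u) G * znorm x u a"
    using dn_bound[OF F subset_refl lsubZ a] dn_bound[OF G subset_refl lsubZ a] by simp
  finally show "\<bar>F a - G a\<bar> \<le> (dnorm (Zsp x u) (znorm x u) F + dnorm (Zsp x u) (znorm x u) G) * znorm x u a"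
    by (simp add: algebra_simps)
qed

lemma Y_D:
  assumes "f \<in> Yspace x u"
  shows "f \<in> bdd_funcs (Zsp x u) (znorm x u)"
    "\<forall>\<epsilon>>0. \<exists>n c. dnorm (Zsp x u) (znorm x u) (\<lambda>a. f a - (\<Sum>j<n. c j * coord_fun (Zsp x u) j a)) < \<epsilon>"
  using assms unfolding Yspace_def by (blast dest: CollectD)+

lemma Y_diff:
  assumes f: "f \<in> Yspace x u" and g: "g \<in> Yspace x u"
  shows "(\<lambda>a. f a - g a) \<in> Yspace x u"
proof -
  have fE: "f \<in> bdd_funcs (Zsp x u) (znorm x u)" and gE: "g \<in> bdd_funcs (Zsp x u) (znorm x u)"
    using Y_D f g by blast+
  have dE: "(\<lambda>a. f a - g a) \<in> bdd_funcs (Zsp x u) (znorm x u)" by (rule E_diff[OF fE gE])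
  have app: "\<exists>n c. dnorm (Zsp x u) (znorm x u) (\<lambda>a. (f a - g a) - (\<Sum>j<n. c j * coord_fun (Zsp x u) j a)) < e"
    if e: "e > 0" for e
  proof -
    have e2: "e/2 > 0" using e by simp
    obtain n1 c1 where 1: "dnorm (Zsp x u) (znorm x u) (\<lambda>a. f a - (\<Sum>j<n1. c1 j * coord_fun (Zsp x u) j a)) < e/2"
      using Y_D(2)[OF f] e2 by blast
    obtain n2 c2 where 2: "dnorm (Zsp x u) (znorm x u) (\<lambda>a. g a - (\<Sum>j<n2. c2 j * coord_fun (Zsp x u) j a)) < e/2"
      using Y_D(2)[OF g] e2 by blast
    define m where "m = max n1 n2"
    define c where "c j = (if j < n1 then c1 j else 0) - (if j < n2 then c2 j else 0)" for j
    define F where "F = (\<lambda>a. f a - (\<Sum>j<n1. c1 j * coord_fun (Zsp x u) j a))"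
    define G where "G = (\<lambda>a. g a - (\<Sum>j<n2. c2 j * coord_fun (Zsp x u) j a))"
    have FE: "F \<in> bdd_funcs (Zsp x u) (znorm x u)" unfolding F_def by (rule E_diff[OF fE cf_sum])
    have GE: "G \<in> bdd_funcs (Zsp x u) (znorm x u)" unfolding G_def by (rule E_diff[OF gE cf_sum])
    have eq: "(\<lambda>a. (f a - g a) - (\<Sum>j<m. c j * coord_fun (Zsp x u) j a)) = (\<lambda>a. F a - G a)"
    proof
      fix a
      have "(\<Sum>j<m. c j * coord_fun (Zsp x u) j a)
          = (\<Sum>j<m. (if j < n1 then c1 j else 0) * coord_fun (Zsp x u) j a) - (\<Sum>j<m. (if j < n2 then c2 j else 0) * coord_fun (Zsp x u) j a)"
        unfolding c_def by (simp add: left_diff_distrib sum_subtractf)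
      also have "\<dots> = (\<Sum>j<n1. c1 j * coord_fun (Zsp x u) j a) - (\<Sum>j<n2. c2 j * coord_fun (Zsp x u) j a)"
        using pad[of n1 m c1] pad[of n2 m c2] by (simp add: m_def)
      finally show "(f a - g a) - (\<Sum>j<m. c j * coord_fun (Zsp x u) j a) = F a - G a"
        by (simp add: F_def G_def)
    qed
    have "dnorm (Zsp x u) (znorm x u) (\<lambda>a. F a - G a) \<le> dnorm (Zsp x u) (znorm x u) F + dnorm (Zsp x u) (znorm x u) G"
      by (rule dn_sub[OF FE GE])
    also have "\<dots> < e/2 + e/2" using 1 2 unfolding F_def G_def by simp
    finally show ?thesis unfolding eq[symmetric] by auto
  qed
  have "(\<lambda>a. f a - g a) \<in> bdd_funcs (Zsp x u) (znorm x u) \<and> (\<forall>\<epsilon>>0. \<exists>n c. dnorm (Zsp x u) (znorm x u) (\<lambda>a. (f a - g a) - (\<Sum>j<n. c j * coord_fun (Zsp x u) j a)) < \<epsilon>)"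
    using dE app by blast
  then show ?thesis unfolding Yspace_def mem_Collect_eq by blast
qed

end

context
  fixes x :: "nat \<Rightarrow> 'a::banach" and u :: "nat \<Rightarrow> 'b::banach"
  assumes unorm: "\<And>n. norm (u n) = 1" and unc: "one_unconditional u"
    and xnorm: "\<And>n. norm (x n) = 1"
    and dense: "sphere 0 1 \<subseteq> closure (range x \<union> range (\<lambda>n. - x n))"
begin

lemmas lsubZ' = lsubZ[OF unorm unc xnorm dense]
lemmas lsubW' = lsubW[OF unorm unc xnorm dense]
lemmas Qadd' = Qadd[OF unorm unc xnorm dense]
lemmas Qsc' = Qsc[OF unorm unc xnorm dense]
lemmas NaddZ' = NaddZ[OF unorm unc xnorm dense]
lemmas NscZ' = NscZ[OF unorm unc xnorm dense]
lemmas dn_bound' = dn_bound[OF unorm unc xnorm dense]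
lemmas dn_le' = dn_le[OF unorm unc xnorm dense]
lemmas dn_nonneg' = dn_nonneg[OF unorm unc xnorm dense]
lemmas Y_diff' = Y_diff[OF unorm unc xnorm dense]
lemmas WZ' = WZ[OF unorm unc xnorm dense]
lemmas bf_add' = bf_add[OF unorm unc xnorm dense]
lemmas bf_scale' = bf_scale[OF unorm unc xnorm dense]
lemmas bf_out' = bf_out[OF unorm unc xnorm dense]
lemmas bf_intro' = bf_intro[OF unorm unc xnorm dense]

lemma annih:
  assumes g: "g \<in> bdd_funcs (Zsp x u) (znorm x u)" and gW: "\<And>a. a \<in> Wsp x u \<Longrightarrow> g a = 0"
  shows "g \<in> Qadj_range x u"
proof -
  define L where "L y = (SOME z. z \<in> Zsp x u \<and> Qmap x z = y \<and> znorm x u z \<le> 2 * norm y)" for y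
  have Lex: "\<exists>z. z \<in> Zsp x u \<and> Qmap x z = y \<and> znorm x u z \<le> 2 * norm y" for y
    using liftZ[OF unorm unc xnorm dense, of y] by blast
  have L: "L y \<in> Zsp x u \<and> Qmap x (L y) = y \<and> znorm x u (L y) \<le> 2 * norm y" for y
    unfolding L_def by (rule someI_ex[OF Lex])
  have key: "g a = g b" if ab: "a \<in> Zsp x u" "b \<in> Zsp x u" "Qmap x a = Qmap x b" for a b
  proof -
    have mb: "(-1) *\<^sub>R b \<in> Zsp x u" using lsubD(3)[OF lsubZ' ab(2)] by blast
    have e: "a + (-1) *\<^sub>R b = a - b" by simp
    have "Qmap x (a + (-1) *\<^sub>R b) = Qmap x a + (-1) *\<^sub>R Qmap x b"
      using Qadd'[OF ab(1) mb] Qsc'[OF ab(2), of "-1"] by (simp only:)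
    then have "Qmap x (a + (-1) *\<^sub>R b) = 0" using ab(3) by simp
    moreover have "a + (-1) *\<^sub>R b \<in> Zsp x u" using lsubD(2)[OF lsubZ' ab(1) mb] .
    ultimately have "a + (-1) *\<^sub>R b \<in> Wsp x u" by (simp add: Wsp_def)
    then have "g (a + (-1) *\<^sub>R b) = 0" by (rule gW)
    moreover have "g (a + (-1) *\<^sub>R b) = g a + (-1) * g b"
      using bf_add'[OF g ab(1) mb] bf_scale'[OF g ab(2), of "-1"] by (simp only:)
    ultimately show ?thesis by simp
  qed
  define D where "D = dnorm (Zsp x u) (znorm x u) g"
  have D0: "0 \<le> D" unfolding D_def by (rule dn_nonneg'[OF g subset_refl lsubZ'])
  define \<phi> where "\<phi> y = g (L y)" for y
  have bl: "bounded_linear \<phi>"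
  proof (rule bounded_linear_intro[where K="2 * D"])
    fix y1 y2
    have s: "L y1 + L y2 \<in> Zsp x u" using lsubD(2)[OF lsubZ'] L by blast
    have "Qmap x (L y1 + L y2) = y1 + y2" using Qadd' L by simp
    then have "g (L (y1 + y2)) = g (L y1 + L y2)" using key[OF _ s] L by metis
    also have "\<dots> = g (L y1) + g (L y2)" using bf_add'[OF g] L by blast
    finally show "\<phi> (y1 + y2) = \<phi> y1 + \<phi> y2" by (simp add: \<phi>_def)
  next
    fix r y
    have s: "r *\<^sub>R L y \<in> Zsp x u" using lsubD(3)[OF lsubZ'] L by blast
    have "Qmap x (r *\<^sub>R L y) = r *\<^sub>R y" using Qsc' L by simp
    then have "g (L (r *\<^sub>R y)) = g (r *\<^sub>R L y)" using key[OF _ s] L by metis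
    also have "\<dots> = r * g (L y)" using bf_scale'[OF g] L by blast
    finally show "\<phi> (r *\<^sub>R y) = r *\<^sub>R \<phi> y" by (simp add: \<phi>_def)
  next
    fix y
    have "\<bar>g (L y)\<bar> \<le> D * znorm x u (L y)" unfolding D_def using L by (intro dn_bound'[OF g subset_refl lsubZ']) blast
    also have "\<dots> \<le> D * (2 * norm y)" using L D0 by (intro mult_left_mono) auto
    finally show "norm (\<phi> y) \<le> norm y * (2 * D)" by (simp add: \<phi>_def algebra_simps)
  qed
  have geq: "g = (\<lambda>a. if a \<in> Zsp x u then \<phi> (Qmap x a) else 0)"
  proof
    fix a
    show "g a = (if a \<in> Zsp x u then \<phi> (Qmap x a) else 0)"
    proof (cases "a \<in> Zsp x u")
      case True
      then show ?thesis using key[OF True, of "L (Qmap x a)"] L by (simp add: \<phi>_def)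
    next
      case False
      then show ?thesis using bf_out'[OF g False] by simp
    qed
  qed
  show ?thesis unfolding Qadj_range_def using bl geq by blast
qed

lemma qr_W:
  assumes "q \<in> Qadj_range x u" "a \<in> Wsp x u"
  shows "q a = 0"
proof -
  obtain \<phi> :: "'a \<Rightarrow> real" where q: "q = (\<lambda>a. if a \<in> Zsp x u then \<phi> (Qmap x a) else 0)" "bounded_linear \<phi>"
    using assms(1) unfolding Qadj_range_def by blast
  have "\<phi> 0 = 0" using linear_0[OF bounded_linear.linear[OF q(2)]] .
  then show ?thesis using assms(2) q(1) by (simp add: Wsp_def)
qed

lemma tds_D:
  assumes "top_direct_sum E NE A B"
  shows "A \<subseteq> E" "B \<subseteq> E" "A \<inter> B = {(\<lambda>a. 0)}" "\<forall>h\<in>E. \<exists>f\<in>A. \<exists>g\<in>B. h = (\<lambda>a. f a + g a)"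
    "\<exists>C. \<forall>f\<in>A. \<forall>g\<in>B. NE f \<le> C * NE (\<lambda>a. f a + g a)"
  using assms unfolding top_direct_sum_def by blast+

lemma extend:
  assumes g: "g \<in> bdd_funcs (Wsp x u) (znorm x u)"
  shows "\<exists>h \<in> bdd_funcs (Zsp x u) (znorm x u). (\<forall>a\<in>Wsp x u. h a = g a)
           \<and> dnorm (Zsp x u) (znorm x u) h \<le> dnorm (Wsp x u) (znorm x u) g"
proof -
  define D where "D = dnorm (Wsp x u) (znorm x u) g"
  have D0: "0 \<le> D" unfolding D_def by (rule dn_nonneg'[OF g WZ' lsubW'])
  have "\<exists>h. (\<forall>a\<in>Zsp x u. \<forall>b\<in>Zsp x u. h (a+b) = h a + h b) \<and> (\<forall>r. \<forall>a\<in>Zsp x u. h (r*\<^sub>R a) = r * h a)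
            \<and> (\<forall>a\<in>Wsp x u. h a = g a) \<and> (\<forall>a\<in>Zsp x u. h a \<le> D * znorm x u a)"
  proof (rule hahn_banach[OF lsubZ' lsubW' WZ'])
    fix a b assume "a \<in> Zsp x u" "b \<in> Zsp x u"
    then show "D * znorm x u (a + b) \<le> D * znorm x u a + D * znorm x u b"
      using NaddZ' D0 by (simp add: mult_left_mono distrib_left[symmetric])
  next
    fix r :: real and a assume "a \<in> Zsp x u" "0 < r"
    then show "D * znorm x u (r *\<^sub>R a) = r * (D * znorm x u a)" using NscZ' by simp
  next
    fix a b assume "a \<in> Wsp x u" "b \<in> Wsp x u"
    then show "g (a + b) = g a + g b" by (rule bf_add'[OF g])
  next
    fix r a assume "a \<in> Wsp x u"
    then show "g (r *\<^sub>R a) = r * g a" by (rule bf_scale'[OF g])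
  next
    fix a assume "a \<in> Wsp x u"
    then have "\<bar>g a\<bar> \<le> D * znorm x u a" unfolding D_def by (rule dn_bound'[OF g WZ' lsubW'])
    then show "g a \<le> D * znorm x u a" by simp
  qed
  then obtain h0 where h0: "\<And>a b. a\<in>Zsp x u \<Longrightarrow> b\<in>Zsp x u \<Longrightarrow> h0 (a+b) = h0 a + h0 b"
    "\<And>r a. a\<in>Zsp x u \<Longrightarrow> h0 (r*\<^sub>R a) = r * h0 a" "\<And>a. a\<in>Wsp x u \<Longrightarrow> h0 a = g a"
    "\<And>a. a\<in>Zsp x u \<Longrightarrow> h0 a \<le> D * znorm x u a" by blast
  define h where "h a = (if a \<in> Zsp x u then h0 a else 0)" for a
  have hb: "\<bar>h a\<bar> \<le> D * znorm x u a" if a: "a \<in> Zsp x u" for a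
  proof -
    have ma: "(-1) *\<^sub>R a \<in> Zsp x u" using lsubD(3)[OF lsubZ' a] .
    have "- h0 a = h0 ((-1) *\<^sub>R a)" using h0(2)[OF a, of "-1"] by simp
    also have "\<dots> \<le> D * znorm x u ((-1) *\<^sub>R a)" by (rule h0(4)[OF ma])
    also have "\<dots> = D * znorm x u a" using NscZ'[OF a, of "-1"] by simp
    finally show ?thesis using h0(4)[OF a] a by (simp add: h_def)
  qed
  have hE: "h \<in> bdd_funcs (Zsp x u) (znorm x u)"
  proof (rule bf_intro'[where C=D])
    fix a b assume ab: "a \<in> Zsp x u" "b \<in> Zsp x u"
    then have "a + b \<in> Zsp x u" using lsubD(2)[OF lsubZ'] by blast
    then show "h (a + b) = h a + h b" using ab h0(1) by (simp add: h_def)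
  next
    fix r a assume a: "a \<in> Zsp x u"
    then have "r *\<^sub>R a \<in> Zsp x u" using lsubD(3)[OF lsubZ'] by blast
    then show "h (r *\<^sub>R a) = r * h a" using a h0(2) by (simp add: h_def)
  next
    fix a assume "a \<in> Zsp x u" then show "\<bar>h a\<bar> \<le> D * znorm x u a" by (rule hb)
  next
    fix a assume "a \<notin> Zsp x u" then show "h a = 0" by (simp add: h_def)
  qed
  have hW: "\<forall>a\<in>Wsp x u. h a = g a" using h0(3) WZ' by (auto simp: h_def)
  have "dnorm (Zsp x u) (znorm x u) h \<le> D" using hb by (intro dn_le'[OF subset_refl lsubZ' D0])
  then show ?thesis using hE hW unfolding D_def by blast
qed

lemma main:
  assumes tds: "top_direct_sum (bdd_funcs (Zsp x u) (znorm x u)) (dnorm (Zsp x u) (znorm x u))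
           (Yspace x u) (Qadj_range x u)"
  shows "fs_isomorphic (Yspace x u) (dnorm (Zsp x u) (znorm x u))
           (bdd_funcs (Wsp x u) (znorm x u)) (dnorm (Wsp x u) (znorm x u))"
proof -
  let ?Z = "Zsp x u" and ?W = "Wsp x u" and ?N = "znorm x u" and ?Y = "Yspace x u" and ?Q = "Qadj_range x u"
  let ?E = "bdd_funcs ?Z ?N" and ?NA = "dnorm ?Z ?N" and ?NB = "dnorm ?W ?N"
  have YE: "?Y \<subseteq> ?E" by (rule tds_D(1)[OF tds])
  have QE: "?Q \<subseteq> ?E" by (rule tds_D(2)[OF tds])
  have YQ: "?Y \<inter> ?Q = {(\<lambda>a. 0)}" by (rule tds_D(3)[OF tds])
  have dec: "\<forall>h\<in>?E. \<exists>f\<in>?Y. \<exists>g\<in>?Q. h = (\<lambda>a. f a + g a)" by (rule tds_D(4)[OF tds])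
  obtain C where C: "\<forall>f\<in>?Y. \<forall>g\<in>?Q. ?NA f \<le> C * ?NA (\<lambda>a. f a + g a)" using tds_D(5)[OF tds] by blast
  define K where "K = max C 1"
  have K: "K > 0" "C \<le> K" by (auto simp: K_def)
  define T where "T f = (\<lambda>a. if a \<in> ?W then f a else 0)" for f :: "(nat \<Rightarrow> real) \<Rightarrow> real"
  have injY: "f = g" if f: "f \<in> ?Y" and g: "g \<in> ?Y" and fg: "\<And>a. a \<in> ?W \<Longrightarrow> f a = g a" for f g
  proof -
    have dY: "(\<lambda>a. f a - g a) \<in> ?Y" by (rule Y_diff'[OF f g])
    then have "(\<lambda>a. f a - g a) \<in> ?E" using YE by blast
    then have "(\<lambda>a. f a - g a) \<in> ?Q" by (rule annih) (simp add: fg)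
    then have "(\<lambda>a. f a - g a) \<in> ?Y \<inter> ?Q" using dY by blast
    then have "(\<lambda>a. f a - g a) = (\<lambda>a. 0)" using YQ by blast
    then show ?thesis by (simp add: fun_eq_iff)
  qed
  have Tmap: "T f \<in> bdd_funcs ?W ?N" if f: "f \<in> ?E" for f
  proof (rule bf_intro'[where C="?NA f"])
    fix a b assume ab: "a \<in> ?W" "b \<in> ?W"
    then have "a + b \<in> ?W" using lsubD(2)[OF lsubW'] by blast
    moreover have "f (a + b) = f a + f b" using bf_add'[OF f] ab WZ' by blast
    ultimately show "T f (a + b) = T f a + T f b" using ab by (simp add: T_def)
  next
    fix r a assume a: "a \<in> ?W"
    then have "r *\<^sub>R a \<in> ?W" using lsubD(3)[OF lsubW'] by blast
    moreover have "f (r *\<^sub>R a) = r * f a" using bf_scale'[OF f] a WZ' by blast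
    ultimately show "T f (r *\<^sub>R a) = r * T f a" using a by (simp add: T_def)
  next
    fix a assume a: "a \<in> ?W"
    then have "\<bar>f a\<bar> \<le> ?NA f * ?N a" using dn_bound'[OF f subset_refl lsubZ'] WZ' by blast
    then show "\<bar>T f a\<bar> \<le> ?NA f * ?N a" using a by (simp add: T_def)
  next
    fix a assume "a \<notin> ?W" then show "T f a = 0" by (simp add: T_def)
  qed
  have decomp: "\<exists>f\<in>?Y. T f = g \<and> ?NA f \<le> K * ?NB g" if g: "g \<in> bdd_funcs ?W ?N" for g
  proof -
    obtain h where hE: "h \<in> ?E" and hW: "\<forall>a\<in>?W. h a = g a" and hn: "?NA h \<le> ?NB g"
      using extend[OF g] by blast
    obtain f q where f: "f \<in> ?Y" and q: "q \<in> ?Q" and hfq: "h = (\<lambda>a. f a + q a)" using dec hE by blast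
    have Tf: "T f = g"
    proof
      fix a
      show "T f a = g a"
      proof (cases "a \<in> ?W")
        case True
        then have "q a = 0" by (rule qr_W[OF q])
        moreover have "h a = g a" using hW True by blast
        ultimately show ?thesis using True hfq by (simp add: T_def)
      next
        case False
        then show ?thesis using bf_out'[OF g False] by (simp add: T_def)
      qed
    qed
    have h0: "0 \<le> ?NA h" by (rule dn_nonneg'[OF hE subset_refl lsubZ'])
    have "?NA f \<le> C * ?NA h" using C f q hfq by blast
    also have "\<dots> \<le> K * ?NA h" using K h0 by (intro mult_right_mono) auto
    also have "\<dots> \<le> K * ?NB g" using K hn by (intro mult_left_mono) auto
    finally show ?thesis using f Tf by blast
  qed
  show ?thesis unfolding fs_isomorphic_def
  proof (intro exI conjI ballI allI)
    show "T ` ?Y = bdd_funcs ?W ?N"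
    proof
      show "T ` ?Y \<subseteq> bdd_funcs ?W ?N" using Tmap YE by blast
      show "bdd_funcs ?W ?N \<subseteq> T ` ?Y" using decomp by blast
    qed
    show "inj_on T ?Y"
    proof (rule inj_onI)
      fix f g assume f: "f \<in> ?Y" and g: "g \<in> ?Y" and e: "T f = T g"
      show "f = g"
      proof (rule injY[OF f g])
        fix a assume a: "a \<in> ?W"
        have "T f a = T g a" using e by simp
        then show "f a = g a" using a by (simp add: T_def)
      qed
    qed
  next
    fix f g assume "f \<in> ?Y" "g \<in> ?Y"
    show "T (\<lambda>a. f a + g a) = (\<lambda>a. T f a + T g a)" by (simp add: T_def fun_eq_iff)
  next
    fix r f assume "f \<in> ?Y"
    show "T (\<lambda>a. r * f a) = (\<lambda>a. r * T f a)" by (simp add: T_def fun_eq_iff)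
  next
    show "0 < 1 / K" using K by simp
  next
    fix f assume f: "f \<in> ?Y"
    have fE: "f \<in> ?E" using f YE by blast
    obtain f' where f': "f' \<in> ?Y" "T f' = T f" "?NA f' \<le> K * ?NB (T f)" using decomp[OF Tmap[OF fE]] by blast
    have "f' = f"
    proof (rule injY[OF f'(1) f])
      fix a assume a: "a \<in> ?W"
      have "T f' a = T f a" using f'(2) by simp
      then show "f' a = f a" using a by (simp add: T_def)
    qed
    then have "?NA f \<le> K * ?NB (T f)" using f'(3) by simp
    then show "1 / K * ?NA f \<le> ?NB (T f)" using K by (simp add: field_simps)
    have "?NB (T f) \<le> ?NA f"
    proof (rule dn_le'[OF WZ' lsubW' dn_nonneg'[OF fE subset_refl lsubZ']])
      fix a assume a: "a \<in> ?W"
      then have "\<bar>f a\<bar> \<le> ?NA f * ?N a" using dn_bound'[OF fE subset_refl lsubZ'] WZ' by blast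
      then show "\<bar>T f a\<bar> \<le> ?NA f * ?N a" using a by (simp add: T_def)
    qed
    then show "?NB (T f) \<le> 1 * ?NA f" by simp
  qed
qed

end

theorem propositionA9:
  fixes x :: "nat \<Rightarrow> 'a::banach" and u :: "nat \<Rightarrow> 'b::banach"
  assumes "\<exists>D::'a set. countable D \<and> closure D = UNIV"
    and "\<forall>n. norm (x n) = 1"
    and "sphere 0 1 \<subseteq> closure (range x \<union> range (\<lambda>n. - x n))"
    and "schauder_basis u" and "\<forall>n. norm (u n) = 1"
    and "one_unconditional u" and "boundedly_complete u"
    and "top_direct_sum (bdd_funcs (Zsp x u) (znorm x u)) (dnorm (Zsp x u) (znorm x u))
           (Yspace x u) (Qadj_range x u)"
  shows "fs_isomorphic (Yspace x u) (dnorm (Zsp x u) (znorm x u))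
           (bdd_funcs (Wsp x u) (znorm x u)) (dnorm (Wsp x u) (znorm x u))"
proof -
  have h1: "\<And>n. norm (u n) = 1" using assms(5) by blast
  have h3: "\<And>n. norm (x n) = 1" using assms(2) by blast
  show ?thesis by (rule main[OF h1 assms(6) h3 assms(3) assms(8)])
qed

end
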